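(* Let $m,k\ge 1$ be integers, and let $N'_{m,k}(\alpha,\beta)=\sum_T\mathrm{wt}(T)$, summed over all Condensed Catalan tableaux $T$ of size $(k,k+m)$ whose shape $\lambda=(\lambda_1,\ldots,\lambda_k)$ satisfies $\lambda_1=m$ and $\lambda_k\ge 1$ (i.e. exactly $k$ nonzero rows and first row of length $m$). Then $$N'_{m,k}(\alpha,\beta)=\alpha^k\beta^m\sum_{\ell=0}^{k}\sum_{j=0}^{m}\alpha^j\beta^\ell\left(\binom{m+\ell-2+\delta_{jm}}{m-1}\binom{k+j-2+\delta_{\ell k}}{k-1}-\binom{m+\ell-2+\delta_{jm}}{m}\binom{k+j-2+\delta_{\ell k}}{k}\right),$$ where $\delta_{rs}$ is the Kronecker delta.
   Context: Binomial coefficients are $\binom{a}{b}=a(a-1)\cdots(a-b+1)/b!$ for integers $a$ and $b\ge 0$, and $\binom{a}{b}=0$ for $b<0$. For a partition $\lambda=(\lambda_1\ge\cdots\ge\lambda_k\ge 0)$ with $\lambda_1\le n-k$, the Young diagram (English convention) consists of boxes $(r,c)$, $1\le r\le k$, $1\le c\le\lambda_r$ (row 1 on top, column 1 leftmost), viewed inside a $k\times(n-k)$ rectangle. A Condensed Catalan tableau of size $(k,n)$ and shape $\lambda$ is an assignment to each box of one of $\alpha$, $\beta$, or empty, such that: (ii) if box $(r,c)$ contains $\beta$, every box $(r,c')$ with $c'<c$ is empty; (iii) if box $(r,c)$ contains $\alpha$, every box $(r',c)$ with $r'<r$ is empty; (iv) every box $(r,c)$ such that there is no $\alpha$ in any box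 $(r',c)$ with $r'>r$ and no $\beta$ in any box $(r,c')$ with $c'>c$ contains $\alpha$ or $\beta$. Its weight is $\mathrm{wt}(T)=\alpha^{k+a}\beta^{n-k+b}$, where $a$ and $b$ are the numbers of $\alpha$'s and $\beta$'s in the filling. *)

theory Defs
  imports Complex_Main
begin

datatype cell = CA | CB | CE  (* alpha, beta, empty *)

definition is_partition :: "nat \<Rightarrow> nat \<Rightarrow> (nat \<Rightarrow> nat) \<Rightarrow> bool" where
  "is_partition k n lam \<longleftrightarrow>
     k \<le> n \<and>
     (\<forall>r. (r < 1 \<or> k < r) \<longrightarrow> lam r = 0) \<and>
     (\<forall>r. 1 \<le> r \<and> r < k \<longrightarrow> lam (Suc r) \<le> lam r) \<and>
     lam 1 \<le> n - k"

text \<open>Box (r,c) lies in the Young diagram (English convention).\<close>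
definition in_diag :: "(nat \<Rightarrow> nat) \<Rightarrow> nat \<Rightarrow> nat \<Rightarrow> bool" where
  "in_diag lam r c \<longleftrightarrow> 1 \<le> r \<and> 1 \<le> c \<and> c \<le> lam r"

definition is_cct :: "nat \<Rightarrow> nat \<Rightarrow> (nat \<Rightarrow> nat) \<Rightarrow> (nat \<times> nat \<Rightarrow> cell) \<Rightarrow> bool" where
  "is_cct k n lam T \<longleftrightarrow>
     is_partition k n lam \<and>
     (\<forall>r c. \<not> in_diag lam r c \<longrightarrow> T (r, c) = CE) \<and>
     (\<forall>r c c'. in_diag lam r c \<and> T (r, c) = CB \<and> 1 \<le> c' \<and> c' < c \<longrightarrow> T (r, c') = CE) \<and>
     (\<forall>r c r'. in_diag lam r c \<and> T (r, c) = CA \<and> 1 \<le> r' \<and> r' < r \<longrightarrow> T (r', c) = CE) \<and>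
     (\<forall>r c. in_diag lam r c \<and>
        \<not> (\<exists>r'. r < r' \<and> in_diag lam r' c \<and> T (r', c) = CA) \<and>
        \<not> (\<exists>c'. c < c' \<and> in_diag lam r c' \<and> T (r, c') = CB)
        \<longrightarrow> T (r, c) = CA \<or> T (r, c) = CB)"

definition num_cell :: "cell \<Rightarrow> (nat \<times> nat \<Rightarrow> cell) \<Rightarrow> nat" where
  "num_cell x T = card {p. T p = x}"

definition cct_wt :: "nat \<Rightarrow> nat \<Rightarrow> real \<Rightarrow> real \<Rightarrow> (nat \<times> nat \<Rightarrow> cell) \<Rightarrow> real" where
  "cct_wt k n \<alpha> \<beta> T = \<alpha> ^ (k + num_cell CA T) * \<beta> ^ (n - k + num_cell CB T)"

definition Nprime :: "nat \<Rightarrow> nat \<Rightarrow> real \<Rightarrow> real \<Rightarrow> real" where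
  "Nprime m k \<alpha> \<beta> =
     (\<Sum>(lam, T) \<in> {(lam, T). is_cct k (k + m) lam T \<and> lam 1 = m \<and> 1 \<le> lam k}.
        cct_wt k (k + m) \<alpha> \<beta> T)"

definition kdelta :: "nat \<Rightarrow> nat \<Rightarrow> int" where
  "kdelta r s = (if r = s then 1 else 0)"

end

theory Submission
  imports Defs
begin


definition aa :: "nat \<Rightarrow> nat \<Rightarrow> int" where "aa e l = int ((e + l) choose l)"
definition ab :: "nat \<Rightarrow> nat \<Rightarrow> int" where "ab e l = (if l = 0 then 0 else int ((e + l) choose (l - 1)))"

definition Sc :: "nat \<Rightarrow> nat \<Rightarrow> nat \<Rightarrow> nat \<Rightarrow> int" where
  "Sc k E J l = (if E = 0 then (if k = 0 \<and> l = 0 then 1 else 0) else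
     (let J0 = min J E; N = k + J0 + (if l = k \<and> J0 < E then 1 else 0) - 1 in
      aa (E - 1) l * int (N choose k) - ab (E - 1) l * int (N choose Suc k)))"

definition Frc :: "nat \<Rightarrow> nat \<Rightarrow> nat \<Rightarrow> nat \<Rightarrow> int" where
  "Frc k E J l = (if 1 \<le> E \<and> J \<le> E then (if J < E then (if l = 0 then 0 else Sc k E J (l - 1))
      else (if l \<le> k then Sc k E J l else 0)) else 0)"

lemma aa_pascal: "aa (Suc e) l = aa e l + (if l = 0 then 0 else aa (Suc e) (l - 1))"
proof (cases l)
  case 0 then show ?thesis by (simp add: aa_def)
next
  case (Suc l')
  have "Suc e + Suc l' = Suc (e + Suc l')" by simp
  then show ?thesis using Suc by (simp add: aa_def binomial_Suc_Suc)
qed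

lemma ab_pascal: "ab (Suc e) l = ab e l + (if l = 0 then 0 else ab (Suc e) (l - 1))"
proof (cases l)
  case 0 then show ?thesis by (simp add: ab_def)
next
  case (Suc l')
  show ?thesis
  proof (cases l')
    case 0 then show ?thesis using Suc by (simp add: ab_def)
  next
    case (Suc l'')
    have "Suc e + Suc (Suc l'') = Suc (e + Suc (Suc l''))" by simp
    then show ?thesis using Suc \<open>l = Suc l'\<close> by (simp add: ab_def binomial_Suc_Suc)
  qed
qed

lemma prod_diff:
  fixes a0 a1 c0 c1 b0 b1 d0 d1 da dc db dd :: int
  assumes "a1 = a0 + da" "c1 = c0 + dc" "b1 = b0 + db" "d1 = d0 + dd"
  shows "a1 * b1 - c1 * d1 = (a0 * b1 - c0 * d1) + (a1 * b0 - c1 * d0) - (a0 * b0 - c0 * d0) + (da * db - dc * dd)"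
  using assms by (simp add: algebra_simps)

lemma Sc_Suc_below:
  assumes "J < Suc e"
  shows "Sc (Suc k) (Suc e) J l = aa e l * int ((k + J + (if l = Suc k then 1 else 0)) choose Suc k)
     - ab e l * int ((k + J + (if l = Suc k then 1 else 0)) choose Suc (Suc k))"
  using assms by (simp add: Sc_def Let_def)

lemma Sc_Suc_diag:
  assumes "Suc e \<le> J"
  shows "Sc (Suc k) (Suc e) J l = aa e l * int ((k + Suc e) choose Suc k) - ab e l * int ((k + Suc e) choose Suc (Suc k))"
  using assms by (simp add: Sc_def Let_def min_def)

lemma Sc_below:
  assumes "J < Suc e"
  shows "Sc k (Suc e) J l = aa e l * int ((k + J + (if l = k then 1 else 0) - 1) choose k)
     - ab e l * int ((k + J + (if l = k then 1 else 0) - 1) choose Suc k)"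
  using assms by (simp add: Sc_def Let_def)

lemma Sc_diag:
  assumes "Suc e \<le> J"
  shows "Sc k (Suc e) J l = aa e l * int ((k + e) choose k) - ab e l * int ((k + e) choose Suc k)"
  using assms by (simp add: Sc_def Let_def min_def)

lemma Sc_zero: "Sc (Suc k) 0 J l = 0"
  by (simp add: Sc_def)


lemma Sc_min: "Sc k E J l = Sc k E (min J E) l"
  by (simp add: Sc_def Let_def)

lemma Frc_below:
  assumes "J < Suc e"
  shows "Frc k (Suc e) J l = (if l = 0 then 0 else
     aa e (l - 1) * int ((k + J + (if l = Suc k then 1 else 0) - 1) choose k)
     - ab e (l - 1) * int ((k + J + (if l = Suc k then 1 else 0) - 1) choose Suc k))"
proof (cases l)
  case 0 then show ?thesis using assms by (simp add: Frc_def)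
next
  case (Suc l')
  then show ?thesis using assms Sc_below[OF assms, of k l'] by (simp add: Frc_def)
qed

lemma Frc_diag:
  "Frc k (Suc e) (Suc e) l = (if l \<le> k then aa e l * int ((k + e) choose k) - ab e l * int ((k + e) choose Suc k) else 0)"
  using Sc_diag[of e "Suc e" k l] by (simp add: Frc_def)

lemma Sc_rec_interior:
  assumes "j < e"
  shows "Sc (Suc k) (Suc (Suc e)) (Suc j) l = Sc (Suc k) (Suc e) (Suc j) l + Sc (Suc k) (Suc (Suc e)) j l
     - Sc (Suc k) (Suc e) j l + Frc k (Suc (Suc e)) (Suc j) l"
proof -
  define \<epsilon> where "\<epsilon> = (if l = Suc k then 1 else (0::nat))"
  define n where "n = k + j + \<epsilon>"
  have n1: "k + Suc j + \<epsilon> = Suc n" by (simp add: n_def)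
  have L: "Sc (Suc k) (Suc (Suc e)) (Suc j) l = aa (Suc e) l * int (Suc n choose Suc k) - ab (Suc e) l * int (Suc n choose Suc (Suc k))"
    using Sc_Suc_below[of "Suc j" "Suc e" k l] assms n1 by (simp add: \<epsilon>_def)
  have T1: "Sc (Suc k) (Suc e) (Suc j) l = aa e l * int (Suc n choose Suc k) - ab e l * int (Suc n choose Suc (Suc k))"
    using Sc_Suc_below[of "Suc j" e k l] assms n1 by (simp add: \<epsilon>_def)
  have T2: "Sc (Suc k) (Suc (Suc e)) j l = aa (Suc e) l * int (n choose Suc k) - ab (Suc e) l * int (n choose Suc (Suc k))"
    using Sc_Suc_below[of j "Suc e" k l] assms by (simp add: \<epsilon>_def n_def)
  have T3: "Sc (Suc k) (Suc e) j l = aa e l * int (n choose Suc k) - ab e l * int (n choose Suc (Suc k))"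
    using Sc_Suc_below[of j e k l] assms by (simp add: \<epsilon>_def n_def)
  have F: "Frc k (Suc (Suc e)) (Suc j) l = (if l = 0 then 0 else aa (Suc e) (l - 1) * int (n choose k) - ab (Suc e) (l - 1) * int (n choose Suc k))"
    using Frc_below[of "Suc j" "Suc e" k l] assms by (simp add: \<epsilon>_def n_def)
  have P1: "int (Suc n choose Suc k) = int (n choose Suc k) + int (n choose k)" by (simp add: binomial_Suc_Suc)
  have P2: "int (Suc n choose Suc (Suc k)) = int (n choose Suc (Suc k)) + int (n choose Suc k)" by (simp add: binomial_Suc_Suc)
  have key: "aa (Suc e) l * int (Suc n choose Suc k) - ab (Suc e) l * int (Suc n choose Suc (Suc k))
     = (aa e l * int (Suc n choose Suc k) - ab e l * int (Suc n choose Suc (Suc k)))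
       + (aa (Suc e) l * int (n choose Suc k) - ab (Suc e) l * int (n choose Suc (Suc k)))
       - (aa e l * int (n choose Suc k) - ab e l * int (n choose Suc (Suc k)))
       + ((if l = 0 then 0 else aa (Suc e) (l - 1)) * int (n choose k) - (if l = 0 then 0 else ab (Suc e) (l - 1)) * int (n choose Suc k))"
    by (rule prod_diff[OF aa_pascal ab_pascal P1 P2])
  show ?thesis using key L T1 T2 T3 F by simp
qed


lemma Sc_rec_sub:
  "Sc (Suc k) (Suc (Suc e)) (Suc e) l = Sc (Suc k) (Suc e) (Suc e) l + Sc (Suc k) (Suc (Suc e)) e l
     - Sc (Suc k) (Suc e) e l + Frc k (Suc (Suc e)) (Suc e) l"
proof -
  define \<epsilon> where "\<epsilon> = (if l = Suc k then 1 else (0::nat))"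
  define n where "n = k + e + \<epsilon>"
  have n1: "k + Suc e + \<epsilon> = Suc n" by (simp add: n_def)
  have L: "Sc (Suc k) (Suc (Suc e)) (Suc e) l = aa (Suc e) l * int (Suc n choose Suc k) - ab (Suc e) l * int (Suc n choose Suc (Suc k))"
    using Sc_Suc_below[of "Suc e" "Suc e" k l] n1 by (simp add: \<epsilon>_def)
  have T1: "Sc (Suc k) (Suc e) (Suc e) l = aa e l * int (Suc n choose Suc k) - ab e l * int (Suc n choose Suc (Suc k))"
  proof (cases "l = Suc k")
    case False
    then show ?thesis using Sc_Suc_diag[of e "Suc e" k l] by (simp add: n_def \<epsilon>_def)
  next
    case True
    then have nn: "n = Suc (k + e)" by (simp add: n_def \<epsilon>_def)
    have e1: "aa e l = int (n choose Suc k)" using True nn by (simp add: aa_def add.commute)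
    have e2: "ab e l = int (n choose k)" using True nn by (simp add: ab_def add.commute)
    have P1: "int (Suc n choose Suc k) = int (n choose Suc k) + int (n choose k)" by (simp add: binomial_Suc_Suc)
    have P2: "int (Suc n choose Suc (Suc k)) = int (n choose Suc (Suc k)) + int (n choose Suc k)" by (simp add: binomial_Suc_Suc)
    have "Sc (Suc k) (Suc e) (Suc e) l = aa e l * int (n choose Suc k) - ab e l * int (n choose Suc (Suc k))"
      using Sc_Suc_diag[of e "Suc e" k l] nn by simp
    also have "\<dots> = aa e l * int (Suc n choose Suc k) - ab e l * int (Suc n choose Suc (Suc k))"
      unfolding P1 P2 e1 e2 by (simp add: algebra_simps)
    finally show ?thesis .
  qed
  have T2: "Sc (Suc k) (Suc (Suc e)) e l = aa (Suc e) l * int (n choose Suc k) - ab (Suc e) l * int (n choose Suc (Suc k))"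
    using Sc_Suc_below[of e "Suc e" k l] by (simp add: \<epsilon>_def n_def)
  have T3: "Sc (Suc k) (Suc e) e l = aa e l * int (n choose Suc k) - ab e l * int (n choose Suc (Suc k))"
    using Sc_Suc_below[of e e k l] by (simp add: \<epsilon>_def n_def)
  have F: "Frc k (Suc (Suc e)) (Suc e) l = (if l = 0 then 0 else aa (Suc e) (l - 1) * int (n choose k) - ab (Suc e) (l - 1) * int (n choose Suc k))"
    using Frc_below[of "Suc e" "Suc e" k l] by (simp add: \<epsilon>_def n_def)
  have P1: "int (Suc n choose Suc k) = int (n choose Suc k) + int (n choose k)" by (simp add: binomial_Suc_Suc)
  have P2: "int (Suc n choose Suc (Suc k)) = int (n choose Suc (Suc k)) + int (n choose Suc k)" by (simp add: binomial_Suc_Suc)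
  have key: "aa (Suc e) l * int (Suc n choose Suc k) - ab (Suc e) l * int (Suc n choose Suc (Suc k))
     = (aa e l * int (Suc n choose Suc k) - ab e l * int (Suc n choose Suc (Suc k)))
       + (aa (Suc e) l * int (n choose Suc k) - ab (Suc e) l * int (n choose Suc (Suc k)))
       - (aa e l * int (n choose Suc k) - ab e l * int (n choose Suc (Suc k)))
       + ((if l = 0 then 0 else aa (Suc e) (l - 1)) * int (n choose k) - (if l = 0 then 0 else ab (Suc e) (l - 1)) * int (n choose Suc k))"
    by (rule prod_diff[OF aa_pascal ab_pascal P1 P2])
  show ?thesis using key L T1 T2 T3 F by simp
qed

lemma Sc_rec_diag:
  assumes l: "l \<le> Suc k"
  shows "Sc (Suc k) (Suc e) (Suc e) l = Sc (Suc k) e (Suc e) l + Sc (Suc k) (Suc e) e l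
     - Sc (Suc k) e e l + Frc k (Suc e) (Suc e) l"
proof -
  have c: "Sc (Suc k) e (Suc e) l = Sc (Suc k) e e l" using Sc_min[of "Suc k" e "Suc e" l] by simp
  define \<epsilon> where "\<epsilon> = (if l = Suc k then 1 else (0::nat))"
  have L: "Sc (Suc k) (Suc e) (Suc e) l = aa e l * int (Suc (k + e) choose Suc k) - ab e l * int (Suc (k + e) choose Suc (Suc k))"
    using Sc_Suc_diag[of e "Suc e" k l] by simp
  have T2: "Sc (Suc k) (Suc e) e l = aa e l * int ((k + e + \<epsilon>) choose Suc k) - ab e l * int ((k + e + \<epsilon>) choose Suc (Suc k))"
    using Sc_Suc_below[of e e k l] by (simp add: \<epsilon>_def)
  have F: "Frc k (Suc e) (Suc e) l = (if l \<le> k then aa e l * int ((k + e) choose k) - ab e l * int ((k + e) choose Suc k) else 0)"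
    by (rule Frc_diag)
  have P1: "int (Suc (k + e) choose Suc k) = int ((k + e) choose Suc k) + int ((k + e) choose k)" by (simp add: binomial_Suc_Suc)
  have P2: "int (Suc (k + e) choose Suc (Suc k)) = int ((k + e) choose Suc (Suc k)) + int ((k + e) choose Suc k)" by (simp add: binomial_Suc_Suc)
  show ?thesis
  proof (cases "l = Suc k")
    case True
    then have "\<epsilon> = 1" by (simp add: \<epsilon>_def)
    then show ?thesis using L T2 F c True by simp
  next
    case False
    then have "\<epsilon> = 0" "l \<le> k" using l by (auto simp: \<epsilon>_def)
    then show ?thesis using L T2 F c unfolding P1 P2 by (simp add: algebra_simps)
  qed
qed


lemma Sc_rec0:
  assumes E: "1 \<le> E" and l: "l \<le> Suc k"
  shows "Sc (Suc k) E 0 l = Sc (Suc k) (E - 1) 0 l + Frc k E 0 l"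
proof -
  obtain e where e: "E = Suc e" using E by (cases E) auto
  define \<epsilon> where "\<epsilon> = (if l = Suc k then 1 else (0::nat))"
  have L: "Sc (Suc k) E 0 l = aa e l * int ((k + \<epsilon>) choose Suc k) - ab e l * int ((k + \<epsilon>) choose Suc (Suc k))"
    using Sc_Suc_below[of 0 e k l] e by (simp add: \<epsilon>_def)
  have F: "Frc k E 0 l = (if l = 0 then 0 else aa e (l - 1) * int ((k + \<epsilon> - 1) choose k) - ab e (l - 1) * int ((k + \<epsilon> - 1) choose Suc k))"
    using Frc_below[of 0 e k l] e by (simp add: \<epsilon>_def)
  show ?thesis
  proof (cases "l = Suc k")
    case True
    then have ep: "\<epsilon> = 1" by (simp add: \<epsilon>_def)
    have z: "k choose Suc k = 0" "k choose Suc (Suc k) = 0" "Suc k choose Suc (Suc k) = 0" by (simp_all add: binomial_eq_0)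
    have L': "Sc (Suc k) E 0 l = aa e (Suc k)" using L ep True z by simp
    have F': "Frc k E 0 l = aa e k" using F ep True by simp
    show ?thesis
    proof (cases e)
      case 0
      then show ?thesis using L' F' e Sc_zero by (simp add: aa_def)
    next
      case (Suc e')
      have "Sc (Suc k) (E - 1) 0 l = aa e' (Suc k)"
        using Sc_Suc_below[of 0 e' k l] Suc e True z by simp
      then show ?thesis using L' F' aa_pascal[of e' "Suc k"] Suc by simp
    qed
  next
    case False
    then have ep: "\<epsilon> = 0" and lk: "l \<le> k" using l by (auto simp: \<epsilon>_def)
    have L': "Sc (Suc k) E 0 l = 0" using L ep by (simp add: binomial_eq_0)
    have F': "Frc k E 0 l = 0"
    proof (cases l)
      case 0 then show ?thesis using F by simp
    next
      case (Suc l')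
      then have "k \<ge> 1" using lk by simp
      then show ?thesis using F ep Suc by (simp add: binomial_eq_0)
    qed
    have P: "Sc (Suc k) (E - 1) 0 l = 0"
    proof (cases e)
      case 0 then show ?thesis using e Sc_zero by simp
    next
      case (Suc e')
      then show ?thesis using Sc_Suc_below[of 0 e' k l] e False by (simp add: binomial_eq_0)
    qed
    show ?thesis using L' F' P by simp
  qed
qed

lemma Sc_rec:
  assumes E: "1 \<le> E" and J: "1 \<le> J" and l: "l \<le> Suc k"
  shows "Sc (Suc k) E J l = Sc (Suc k) (E - 1) J l + Sc (Suc k) E (J - 1) l - Sc (Suc k) (E - 1) (J - 1) l + Frc k E J l"
proof -
  obtain e where e: "E = Suc e" using E by (cases E) auto
  obtain j where j: "J = Suc j" using J by (cases J) auto
  consider "E < J" | "J = E" | "J < E" by linarith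
  then show ?thesis
  proof cases
    case 1
    have m: "min J E = E" "min (J - 1) E = E" "min J (E - 1) = E - 1" "min (J - 1) (E - 1) = E - 1"
      using 1 by auto
    have a: "Sc (Suc k) E J l = Sc (Suc k) E (J - 1) l"
      using Sc_min[of "Suc k" E J l] Sc_min[of "Suc k" E "J - 1" l] m by metis
    have b: "Sc (Suc k) (E - 1) J l = Sc (Suc k) (E - 1) (J - 1) l"
      using Sc_min[of "Suc k" "E - 1" J l] Sc_min[of "Suc k" "E - 1" "J - 1" l] m by metis
    have c: "Frc k E J l = 0" using 1 by (simp add: Frc_def)
    show ?thesis using a b c by simp
  next
    case 2
    then show ?thesis using Sc_rec_diag[OF l, of e] e by simp
  next
    case 3
    then obtain e' where e': "e = Suc e'" using e j by (cases e) auto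
    have "j \<le> e'" using 3 e e' j by simp
    then consider "j < e'" | "j = e'" by linarith
    then show ?thesis
    proof cases
      case 1 then show ?thesis using Sc_rec_interior[OF 1, of k l] e e' j by simp
    next
      case 2 then show ?thesis using Sc_rec_sub[of k e' l] e e' j by simp
    qed
  qed
qed


fun Fr :: "real \<Rightarrow> nat \<Rightarrow> nat \<Rightarrow> nat \<Rightarrow> real" where
  "Fr \<beta> 0 E J = (if E = 0 \<and> J = 0 then 1 else 0)"
| "Fr \<beta> (Suc k) E J = (if 1 \<le> E \<and> J \<le> E then \<beta> ^ (if J < E then 1 else 0) * (\<Sum>E'\<le>E. \<Sum>J'\<le>J. Fr \<beta> k E' J') else 0)"

definition Ss :: "real \<Rightarrow> nat \<Rightarrow> nat \<Rightarrow> nat \<Rightarrow> real" where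
  "Ss \<beta> k E J = (\<Sum>E'\<le>E. \<Sum>J'\<le>J. Fr \<beta> k E' J')"

lemma Ss_rec:
  "Ss \<beta> k 0 0 = Fr \<beta> k 0 0"
  "Ss \<beta> k (Suc e) 0 = Ss \<beta> k e 0 + Fr \<beta> k (Suc e) 0"
  "Ss \<beta> k 0 (Suc j) = Ss \<beta> k 0 j + Fr \<beta> k 0 (Suc j)"
  "Ss \<beta> k (Suc e) (Suc j) = Ss \<beta> k e (Suc j) + Ss \<beta> k (Suc e) j - Ss \<beta> k e j + Fr \<beta> k (Suc e) (Suc j)"
  by (simp_all add: Ss_def sum.distrib)

lemma Sc_0_0: "Sc 0 E J 0 = 1"
  by (simp add: Sc_def Let_def aa_def ab_def)

lemma Fr_Suc_closed:
  assumes IH: "Ss \<beta> k E J = (\<Sum>l\<le>k. \<beta> ^ l * real_of_int (Sc k E J l))"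
  shows "Fr \<beta> (Suc k) E J = (\<Sum>l\<le>Suc k. \<beta> ^ l * real_of_int (Frc k E J l))"
proof -
  have Fr: "Fr \<beta> (Suc k) E J = (if 1 \<le> E \<and> J \<le> E then \<beta> ^ (if J < E then 1 else 0) * Ss \<beta> k E J else 0)"
    by (simp add: Ss_def)
  consider "1 \<le> E \<and> J < E" | "1 \<le> E \<and> J = E" | "\<not> (1 \<le> E \<and> J \<le> E)" by linarith
  then show ?thesis
  proof cases
    case 1
    have "Fr \<beta> (Suc k) E J = \<beta> * (\<Sum>l\<le>k. \<beta> ^ l * real_of_int (Sc k E J l))" using Fr IH 1 by simp
    also have "\<dots> = (\<Sum>l\<le>k. \<beta> ^ Suc l * real_of_int (Sc k E J l))" by (simp add: sum_distrib_left mult.assoc)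
    also have "\<dots> = (\<Sum>l\<le>Suc k. \<beta> ^ l * real_of_int (if l = 0 then 0 else Sc k E J (l - 1)))"
      by (subst sum.atMost_Suc_shift) simp
    also have "\<dots> = (\<Sum>l\<le>Suc k. \<beta> ^ l * real_of_int (Frc k E J l))"
      using 1 by (intro sum.cong) (auto simp: Frc_def)
    finally show ?thesis .
  next
    case 2
    have "Fr \<beta> (Suc k) E J = (\<Sum>l\<le>k. \<beta> ^ l * real_of_int (Sc k E J l))" using Fr IH 2 by simp
    also have "\<dots> = (\<Sum>l\<le>Suc k. \<beta> ^ l * real_of_int (if l \<le> k then Sc k E J l else 0))"
      by (simp add: sum.atMost_Suc)
    also have "\<dots> = (\<Sum>l\<le>Suc k. \<beta> ^ l * real_of_int (Frc k E J l))"
      using 2 by (intro sum.cong) (auto simp: Frc_def)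
    finally show ?thesis .
  next
    case 3
    then have "\<And>l. Frc k E J l = 0" unfolding Frc_def by auto
    moreover have "Fr \<beta> (Suc k) E J = 0" using 3 by auto
    ultimately show ?thesis by simp
  qed
qed

lemma Ss_closed: "Ss \<beta> k E J = (\<Sum>l\<le>k. \<beta> ^ l * real_of_int (Sc k E J l))"
proof (induction k arbitrary: E J)
  case 0
  have "Ss \<beta> 0 E J = 1"
  proof -
    have "Ss \<beta> 0 E J = (\<Sum>E'\<le>E. \<Sum>J'\<le>J. if E' = 0 \<and> J' = 0 then 1 else 0)" by (simp add: Ss_def)
    also have "\<dots> = (\<Sum>E'\<le>E. if E' = 0 then 1 else 0)"
      by (intro sum.cong) auto
    also have "\<dots> = 1" by simp
    finally show ?thesis .
  qed
  then show ?case by (simp add: Sc_0_0)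
next
  case (Suc k)
  note FrS = Fr_Suc_closed[OF Suc.IH]
  have z: "Ss \<beta> (Suc k) 0 J = 0" for J
    by (simp add: Ss_def)
  show ?case
  proof (induction E arbitrary: J)
    case 0
    then show ?case using z by (simp add: Sc_zero)
  next
    case (Suc e)
    note IHE = Suc.IH
    show ?case
    proof (induction J)
      case 0
      have "Ss \<beta> (Suc k) (Suc e) 0 = (\<Sum>l\<le>Suc k. \<beta> ^ l * real_of_int (Sc (Suc k) e 0 l + Frc k (Suc e) 0 l))"
        using Ss_rec(2)[of \<beta> "Suc k" e] IHE[of 0] FrS[of "Suc e" 0]
        by (simp add: sum.distrib algebra_simps)
      also have "\<dots> = (\<Sum>l\<le>Suc k. \<beta> ^ l * real_of_int (Sc (Suc k) (Suc e) 0 l))"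
        by (intro sum.cong refl) (simp add: Sc_rec0[of "Suc e"])
      finally show ?case .
    next
      case (Suc j)
      have "Ss \<beta> (Suc k) (Suc e) (Suc j) = (\<Sum>l\<le>Suc k. \<beta> ^ l * real_of_int (Sc (Suc k) e (Suc j) l + Sc (Suc k) (Suc e) j l - Sc (Suc k) e j l + Frc k (Suc e) (Suc j) l))"
        using Ss_rec(4)[of \<beta> "Suc k" e j] IHE[of "Suc j"] IHE[of j] Suc.IH FrS[of "Suc e" "Suc j"]
        by (simp add: sum.distrib sum_subtractf algebra_simps)
      also have "\<dots> = (\<Sum>l\<le>Suc k. \<beta> ^ l * real_of_int (Sc (Suc k) (Suc e) (Suc j) l))"
        by (intro sum.cong refl) (simp add: Sc_rec[of "Suc e" "Suc j"])
      finally show ?case .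
    qed
  qed
qed




definition "cd1 lam T \<longleftrightarrow> (\<forall>r c. \<not> in_diag lam r c \<longrightarrow> T (r, c) = CE)"
definition "cd2 lam T \<longleftrightarrow> (\<forall>r c c'. in_diag lam r c \<and> T (r, c) = CB \<and> 1 \<le> c' \<and> c' < c \<longrightarrow> T (r, c') = CE)"
definition "cd3 lam T \<longleftrightarrow> (\<forall>r c r'. in_diag lam r c \<and> T (r, c) = CA \<and> 1 \<le> r' \<and> r' < r \<longrightarrow> T (r', c) = CE)"
definition "cd4 lam T \<longleftrightarrow> (\<forall>r c. in_diag lam r c \<and>
        \<not> (\<exists>r'. r < r' \<and> in_diag lam r' c \<and> T (r', c) = CA) \<and>
        \<not> (\<exists>c'. c < c' \<and> in_diag lam r c' \<and> T (r, c') = CB)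
        \<longrightarrow> T (r, c) = CA \<or> T (r, c) = CB)"
definition "pz k lam \<longleftrightarrow> (\<forall>r. (r < 1 \<or> k < r) \<longrightarrow> lam r = 0)"
definition "pm k lam \<longleftrightarrow> (\<forall>r. 1 \<le> r \<and> r < k \<longrightarrow> lam (Suc r) \<le> lam r)"
definition "pp k lam \<longleftrightarrow> (\<forall>r. 1 \<le> r \<and> r \<le> k \<longrightarrow> 1 \<le> lam r)"

definition okT :: "nat \<Rightarrow> (nat \<Rightarrow> nat) \<Rightarrow> (nat \<times> nat \<Rightarrow> cell) \<Rightarrow> bool" where
  "okT k lam T \<longleftrightarrow> pz k lam \<and> pm k lam \<and> pp k lam \<and> cd1 lam T \<and> cd2 lam T \<and> cd3 lam T \<and> cd4 lam T"

definition restrL :: "(nat \<Rightarrow> nat) \<Rightarrow> nat \<Rightarrow> nat" where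
  "restrL lam = (\<lambda>r. if r = 0 then 0 else lam (Suc r))"
definition restrT :: "(nat \<times> nat \<Rightarrow> cell) \<Rightarrow> nat \<times> nat \<Rightarrow> cell" where
  "restrT T = (\<lambda>(r,c). if r = 0 then CE else T (Suc r, c))"
definition live :: "(nat \<times> nat \<Rightarrow> cell) \<Rightarrow> nat \<Rightarrow> nat set" where
  "live T E = {c. 1 \<le> c \<and> c \<le> E \<and> (\<forall>r. T (r, c) \<noteq> CA)}"
definition buildL :: "nat \<Rightarrow> (nat \<Rightarrow> nat) \<Rightarrow> nat \<Rightarrow> nat" where
  "buildL E lam = (\<lambda>r. if r = 0 then 0 else if r = 1 then E else lam (r - 1))"
definition topf :: "nat \<Rightarrow> (nat \<times> nat \<Rightarrow> cell) \<Rightarrow> nat \<Rightarrow> nat \<Rightarrow> cell" where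
  "topf E T b c = (if b \<noteq> 0 \<and> c = b then CB else if c \<in> live T E \<and> b < c then CA else CE)"
definition buildT :: "nat \<Rightarrow> (nat \<times> nat \<Rightarrow> cell) \<Rightarrow> nat \<Rightarrow> nat \<times> nat \<Rightarrow> cell" where
  "buildT E T b = (\<lambda>(r,c). if r = 0 then CE else if r = 1 then topf E T b c else T (r - 1, c))"
definition bpos :: "(nat \<times> nat \<Rightarrow> cell) \<Rightarrow> nat" where
  "bpos T = (if \<exists>c. T (1, c) = CB then THE c. T (1, c) = CB else 0)"

lemma in_diag_restr: "in_diag (restrL lam) r c \<longleftrightarrow> 1 \<le> r \<and> in_diag lam (Suc r) c"
  by (auto simp: in_diag_def restrL_def)

lemma restr_ok:
  assumes "okT (Suc k) lam T"
  shows "okT k (restrL lam) (restrT T)"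
proof -
  have L: "pz (Suc k) lam" "pm (Suc k) lam" "pp (Suc k) lam" and
    c1: "cd1 lam T" and c2: "cd2 lam T" and c3: "cd3 lam T" and c4: "cd4 lam T"
    using assms unfolding okT_def by auto
  have "cd1 (restrL lam) (restrT T)"
    unfolding cd1_def in_diag_restr
  proof (intro allI impI)
    fix r c assume "\<not> (1 \<le> r \<and> in_diag lam (Suc r) c)"
    then show "restrT T (r, c) = CE" using c1[unfolded cd1_def, rule_format, of "Suc r" c] by (cases "r = 0") (auto simp: restrT_def)
  qed
  moreover have "cd2 (restrL lam) (restrT T)"
    unfolding cd2_def in_diag_restr
  proof (intro allI impI)
    fix r c c' assume a: "(1 \<le> r \<and> in_diag lam (Suc r) c) \<and> restrT T (r, c) = CB \<and> 1 \<le> c' \<and> c' < c"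
    then show "restrT T (r, c') = CE" using c2[unfolded cd2_def, rule_format, of "Suc r" c c'] by (auto simp: restrT_def)
  qed
  moreover have "cd3 (restrL lam) (restrT T)"
    unfolding cd3_def in_diag_restr
  proof (intro allI impI)
    fix r c r' assume a: "(1 \<le> r \<and> in_diag lam (Suc r) c) \<and> restrT T (r, c) = CA \<and> 1 \<le> r' \<and> r' < r"
    then show "restrT T (r', c) = CE" using c3[unfolded cd3_def, rule_format, of "Suc r" c "Suc r'"] by (auto simp: restrT_def)
  qed
  moreover have "cd4 (restrL lam) (restrT T)"
    unfolding cd4_def in_diag_restr
  proof (intro allI impI)
    fix r c assume a: "(1 \<le> r \<and> in_diag lam (Suc r) c) \<and>
        \<not> (\<exists>r'. r < r' \<and> (1 \<le> r' \<and> in_diag lam (Suc r') c) \<and> restrT T (r', c) = CA) \<and>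
        \<not> (\<exists>c'. c < c' \<and> (1 \<le> r \<and> in_diag lam (Suc r) c') \<and> restrT T (r, c') = CB)"
    have "\<not> (\<exists>r'. Suc r < r' \<and> in_diag lam r' c \<and> T (r', c) = CA)"
    proof
      assume "\<exists>r'. Suc r < r' \<and> in_diag lam r' c \<and> T (r', c) = CA"
      then obtain r' where "Suc r < r'" "in_diag lam r' c" "T (r', c) = CA" by blast
      then show False using a[THEN conjunct2, THEN conjunct1] 
        by (cases r') (auto simp: restrT_def)
    qed
    moreover have "\<not> (\<exists>c'. c < c' \<and> in_diag lam (Suc r) c' \<and> T (Suc r, c') = CB)"
      using a by (auto simp: restrT_def)
    ultimately show "restrT T (r, c) = CA \<or> restrT T (r, c) = CB"
      using c4[unfolded cd4_def, rule_format, of "Suc r" c] a by (auto simp: restrT_def)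
  qed
  moreover have "pz k (restrL lam)" using L by (auto simp: pz_def restrL_def)
  moreover have "pm k (restrL lam)" using L by (auto simp: pm_def restrL_def)
  moreover have "pp k (restrL lam)" using L by (auto simp: pp_def restrL_def)
  ultimately show ?thesis by (simp add: okT_def)
qed


lemma okT_parts:
  assumes "okT k lam T"
  shows "pz k lam" "pm k lam" "pp k lam" "cd1 lam T" "cd2 lam T" "cd3 lam T" "cd4 lam T"
  using assms unfolding okT_def by auto

lemma cd1_D: "cd1 lam T \<Longrightarrow> T (r, c) \<noteq> CE \<Longrightarrow> in_diag lam r c"
  unfolding cd1_def by blast

lemma row1_beta_unique:
  assumes "okT k lam T" "T (1, c) = CB" "T (1, c') = CB"
  shows "c = c'"
proof (rule ccontr)
  assume ne: "c \<noteq> c'"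
  have c2: "cd2 lam T" and c1: "cd1 lam T" using okT_parts[OF assms(1)] by auto
  have d: "in_diag lam 1 c" "in_diag lam 1 c'" using cd1_D[OF c1] assms by auto
  show False
  proof (cases "c < c'")
    case True
    then have "T (1, c) = CE" using c2[unfolded cd2_def, rule_format, of 1 c' c] d assms
      by (auto simp: in_diag_def)
    then show False using assms by simp
  next
    case False
    then have "c' < c" using ne by simp
    then have "T (1, c') = CE" using c2[unfolded cd2_def, rule_format, of 1 c c'] d assms
      by (auto simp: in_diag_def)
    then show False using assms by simp
  qed
qed

lemma bpos_prop:
  assumes "okT k lam T"
  shows "(bpos T \<noteq> 0 \<and> T (1, bpos T) = CB) \<or> (bpos T = 0 \<and> (\<forall>c. T (1, c) \<noteq> CB))"
proof (cases "\<exists>c. T (1, c) = CB")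
  case True
  then obtain c where c: "T (1, c) = CB" by blast
  have u: "\<And>c'. T (1, c') = CB \<Longrightarrow> c' = c" using row1_beta_unique[OF assms] c by blast
  have th: "(THE c'. T (1, c') = CB) = c" using c u by (rule the_equality)
  have "bpos T = c" unfolding bpos_def using True th by simp
  moreover have "c \<noteq> 0" using cd1_D[OF okT_parts(4)[OF assms], of 1 c] c by (auto simp: in_diag_def)
  ultimately show ?thesis using c by auto
next
  case False
  then show ?thesis by (auto simp: bpos_def)
qed

lemma bpos_eq:
  assumes "okT k lam T" "T (1, c) = CB"
  shows "bpos T = c"
  using bpos_prop[OF assms(1)] row1_beta_unique[OF assms(1)] assms(2) by metis

lemma live_restr: "c \<in> live (restrT T) E \<longleftrightarrow> 1 \<le> c \<and> c \<le> E \<and> (\<forall>r. 2 \<le> r \<longrightarrow> T (r, c) \<noteq> CA)"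
proof -
  have "(\<forall>r. restrT T (r, c) \<noteq> CA) \<longleftrightarrow> (\<forall>r. 2 \<le> r \<longrightarrow> T (r, c) \<noteq> CA)"
  proof
    assume a: "\<forall>r. restrT T (r, c) \<noteq> CA"
    show "\<forall>r. 2 \<le> r \<longrightarrow> T (r, c) \<noteq> CA"
    proof (intro allI impI)
      fix r :: nat assume "2 \<le> r"
      then obtain r' where "r = Suc r'" "r' \<noteq> 0" by (cases r) auto
      then show "T (r, c) \<noteq> CA" using a[rule_format, of r'] by (auto simp: restrT_def)
    qed
  next
    assume a: "\<forall>r. 2 \<le> r \<longrightarrow> T (r, c) \<noteq> CA"
    show "\<forall>r. restrT T (r, c) \<noteq> CA"
      using a by (auto simp: restrT_def)
  qed
  then show ?thesis by (auto simp: live_def)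
qed

lemma decomp:
  assumes ok: "okT (Suc k) lam T"
  shows "restrL lam 1 \<le> lam 1"
    and "buildL (lam 1) (restrL lam) = lam"
    and "bpos T \<in> insert 0 (live (restrT T) (lam 1))"
    and "buildT (lam 1) (restrT T) (bpos T) = T"
proof -
  note P = okT_parts[OF ok]
  show "restrL lam 1 \<le> lam 1"
  proof (cases k)
    case 0
    then show ?thesis using P(1) by (simp add: pz_def restrL_def)
  next
    case (Suc k')
    then show ?thesis using P(2) by (simp add: pm_def restrL_def)
  qed
  show "buildL (lam 1) (restrL lam) = lam"
    using P(1) by (auto simp: buildL_def restrL_def pz_def fun_eq_iff)
  let ?E = "lam 1" and ?b = "bpos T"
  have bl: "?b \<noteq> 0 \<Longrightarrow> ?b \<in> live (restrT T) ?E"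
  proof -
    assume b0: "?b \<noteq> 0"
    then have tb: "T (1, ?b) = CB" using bpos_prop[OF ok] by auto
    then have dg: "in_diag lam 1 ?b" using cd1_D[OF P(4)] by auto
    have "\<forall>r. 2 \<le> r \<longrightarrow> T (r, ?b) \<noteq> CA"
    proof (intro allI impI notI)
      fix r :: nat assume r: "2 \<le> r" "T (r, ?b) = CA"
      then have "in_diag lam r ?b" using cd1_D[OF P(4)] by auto
      then have "T (1, ?b) = CE" using P(6)[unfolded cd3_def, rule_format, of r ?b 1] r by auto
      then show False using tb by simp
    qed
    then show ?thesis using dg by (auto simp: live_restr in_diag_def)
  qed
  then show "?b \<in> insert 0 (live (restrT T) ?E)" by auto
  have row1: "T (1, c) = topf ?E (restrT T) ?b c" for c
  proof (cases "T (1, c)")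
    case CB
    then have "?b = c" using bpos_eq[OF ok] by auto
    moreover have "c \<noteq> 0" using cd1_D[OF P(4), of 1 c] CB by (auto simp: in_diag_def)
    ultimately show ?thesis using CB by (simp add: topf_def)
  next
    case CA
    then have dg: "in_diag lam 1 c" using cd1_D[OF P(4)] by auto
    have nb: "\<not> (?b \<noteq> 0 \<and> c = ?b)" using bpos_prop[OF ok] CA by auto
    have lv: "c \<in> live (restrT T) ?E"
    proof -
      have "\<forall>r. 2 \<le> r \<longrightarrow> T (r, c) \<noteq> CA"
      proof (intro allI impI notI)
        fix r :: nat assume r: "2 \<le> r" "T (r, c) = CA"
        then have "in_diag lam r c" using cd1_D[OF P(4)] by auto
        then have "T (1, c) = CE" using P(6)[unfolded cd3_def, rule_format, of r c 1] r by auto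
        then show False using CA by simp
      qed
      then show ?thesis using dg by (auto simp: live_restr in_diag_def)
    qed
    have "?b < c"
    proof (rule ccontr)
      assume "\<not> ?b < c"
      then have "c < ?b" using nb dg by (auto simp: in_diag_def)
      then have b0: "?b \<noteq> 0" by simp
      then have tb: "T (1, ?b) = CB" using bpos_prop[OF ok] by auto
      then have "in_diag lam 1 ?b" using cd1_D[OF P(4)] by auto
      then have "T (1, c) = CE" using P(5)[unfolded cd2_def, rule_format, of 1 ?b c] tb \<open>c < ?b\<close> dg
        by (auto simp: in_diag_def)
      then show False using CA by simp
    qed
    then show ?thesis using CA nb lv by (simp add: topf_def)
  next
    case CE
    have nb: "\<not> (?b \<noteq> 0 \<and> c = ?b)" using bpos_prop[OF ok] CE by auto
    have "\<not> (c \<in> live (restrT T) ?E \<and> ?b < c)"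
    proof
      assume a: "c \<in> live (restrT T) ?E \<and> ?b < c"
      then have dg: "in_diag lam 1 c" by (auto simp: live_restr in_diag_def)
      have n1: "\<not> (\<exists>r'. 1 < r' \<and> in_diag lam r' c \<and> T (r', c) = CA)"
        using a by (auto simp: live_restr)
      have n2: "\<not> (\<exists>c'. c < c' \<and> in_diag lam 1 c' \<and> T (1, c') = CB)"
        using a bpos_eq[OF ok] by fastforce
      have "T (1, c) = CA \<or> T (1, c) = CB"
        using P(7)[unfolded cd4_def, rule_format, of 1 c] dg n1 n2 by blast
      then show False using CE by simp
    qed
    then show ?thesis using CE nb by (simp add: topf_def)
  qed
  show "buildT ?E (restrT T) ?b = T"
  proof (rule ext, clarify)
    fix r c
    show "buildT ?E (restrT T) ?b (r, c) = T (r, c)"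
    proof (cases "r = 0")
      case True
      then show ?thesis using P(4) by (auto simp: buildT_def cd1_def in_diag_def)
    next
      case False
      then show ?thesis using row1[of c] by (cases "r = 1") (auto simp: buildT_def restrT_def)
    qed
  qed
qed


lemma in_diag_build:
  "in_diag (buildL E lam) r c \<longleftrightarrow> (r = 1 \<and> 1 \<le> c \<and> c \<le> E) \<or> (2 \<le> r \<and> in_diag lam (r - 1) c)"
  by (auto simp: in_diag_def buildL_def)

lemma build_ok:
  assumes ok: "okT k lam T" and le: "lam 1 \<le> E" and E1: "1 \<le> E"
    and b: "b \<in> insert 0 (live T E)"
  shows "okT (Suc k) (buildL E lam) (buildT E T b)"
    and "restrL (buildL E lam) = lam"
    and "restrT (buildT E T b) = T"
    and "bpos (buildT E T b) = b"
    and "buildL E lam 1 = E"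
proof -
  note P = okT_parts[OF ok]
  let ?L = "buildL E lam" and ?T = "buildT E T b"
  have bt1: "?T (1, c) = topf E T b c" for c by (simp add: buildT_def)
  have bt1s: "?T (Suc 0, c) = topf E T b c" for c by (simp add: buildT_def)
  have btr: "2 \<le> r \<Longrightarrow> ?T (r, c) = T (r - 1, c)" for r c by (simp add: buildT_def)
  have bt0: "?T (0, c) = CE" for c by (simp add: buildT_def)
  have blive: "b \<noteq> 0 \<Longrightarrow> 1 \<le> b \<and> b \<le> E \<and> (\<forall>r. T (r, b) \<noteq> CA)" using b by (auto simp: live_def)
  have T0: "T (0, c) = CE" for c using P(4) by (auto simp: cd1_def in_diag_def)
  have topfCB: "topf E T b c = CB \<longleftrightarrow> b \<noteq> 0 \<and> c = b" for c by (simp add: topf_def)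
  have "pz (Suc k) ?L" using P(1) by (auto simp: pz_def buildL_def)
  moreover have "pm (Suc k) ?L"
    unfolding pm_def
  proof (intro allI impI)
    fix r assume r: "1 \<le> r \<and> r < Suc k"
    show "?L (Suc r) \<le> ?L r"
    proof (cases "r = 1")
      case True then show ?thesis using le by (simp add: buildL_def)
    next
      case False
      then have "1 \<le> r - 1 \<and> r - 1 < k" using r by auto
      then have "lam (Suc (r - 1)) \<le> lam (r - 1)" using P(2)[unfolded pm_def, rule_format, of "r - 1"] by blast
      then show ?thesis using r False by (auto simp: buildL_def)
    qed
  qed
  moreover have "pp (Suc k) ?L"
    unfolding pp_def
  proof (intro allI impI)
    fix r :: nat assume r: "1 \<le> r \<and> r \<le> Suc k"
    show "1 \<le> ?L r"
    proof (cases "r = 1")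
      case True then show ?thesis using E1 by (simp add: buildL_def)
    next
      case False
      then have "1 \<le> r - 1 \<and> r - 1 \<le> k" using r by auto
      then have "1 \<le> lam (r - 1)" using P(3)[unfolded pp_def, rule_format, of "r - 1"] by blast
      then show ?thesis using r False by (auto simp: buildL_def)
    qed
  qed
  moreover have "cd1 ?L ?T"
    unfolding cd1_def in_diag_build
  proof (intro allI impI)
    fix r c assume a: "\<not> ((r = 1 \<and> 1 \<le> c \<and> c \<le> E) \<or> (2 \<le> r \<and> in_diag lam (r - 1) c))"
    consider "r = 0" | "r = 1" | "2 \<le> r" by linarith
    then show "?T (r, c) = CE"
    proof cases
      case 1 then show ?thesis by (simp add: bt0)
    next
      case 2
      then have "c < 1 \<or> E < c" using a by auto
      then show ?thesis using 2 blive by (auto simp: buildT_def topf_def live_def)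
    next
      case 3
      then show ?thesis using a P(4) by (auto simp: btr cd1_def)
    qed
  qed
  moreover have "cd2 ?L ?T"
    unfolding cd2_def
  proof (intro allI impI)
    fix r c c' assume a: "in_diag ?L r c \<and> ?T (r, c) = CB \<and> 1 \<le> c' \<and> c' < c"
    consider "r = 0" | "r = 1" | "2 \<le> r" by linarith
    then show "?T (r, c') = CE"
    proof cases
      case 1 then show ?thesis using a by (simp add: bt0)
    next
      case 2
      then have "b \<noteq> 0 \<and> c = b" using a by (simp add: bt1 bt1s topfCB)
      then show ?thesis using 2 a by (auto simp: bt1 bt1s topf_def)
    next
      case 3
      then have "in_diag lam (r - 1) c" "T (r - 1, c) = CB" using a by (auto simp: btr in_diag_build)
      then show ?thesis using 3 a P(5)[unfolded cd2_def, rule_format, of "r - 1" c c'] by (simp add: btr)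
    qed
  qed
  moreover have "cd3 ?L ?T"
    unfolding cd3_def
  proof (intro allI impI)
    fix r c r' assume a: "in_diag ?L r c \<and> ?T (r, c) = CA \<and> 1 \<le> r' \<and> r' < r"
    then have r2: "2 \<le> r" by linarith
    then have tc: "T (r - 1, c) = CA" "in_diag lam (r - 1) c" using a by (auto simp: btr in_diag_build)
    show "?T (r', c) = CE"
    proof (cases "r' = 1")
      case True
      have "c \<notin> live T E" using tc by (auto simp: live_def)
      moreover have "\<not> (b \<noteq> 0 \<and> c = b)" using blive tc by auto
      ultimately show ?thesis using True by (simp add: bt1 bt1s topf_def)
    next
      case False
      then have rr: "1 \<le> r' - 1 \<and> r' - 1 < r - 1" "2 \<le> r'" using a by auto
      then have "T (r' - 1, c) = CE" using tc P(6)[unfolded cd3_def, rule_format, of "r - 1" c "r' - 1"]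
        by blast
      then show ?thesis using rr by (simp add: btr)
    qed
  qed
  moreover have "cd4 ?L ?T"
    unfolding cd4_def
  proof (intro allI impI)
    fix r c assume a: "in_diag ?L r c \<and>
        \<not> (\<exists>r'. r < r' \<and> in_diag ?L r' c \<and> ?T (r', c) = CA) \<and>
        \<not> (\<exists>c'. c < c' \<and> in_diag ?L r c' \<and> ?T (r, c') = CB)"
    consider "r = 1" | "2 \<le> r" using a by (auto simp: in_diag_build)
    then show "?T (r, c) = CA \<or> ?T (r, c) = CB"
    proof cases
      case 1
      have dc: "1 \<le> c" "c \<le> E" using a 1 by (auto simp: in_diag_build)
      have "\<forall>r. T (r, c) \<noteq> CA"
      proof (intro allI notI)
        fix r' assume t: "T (r', c) = CA"
        then have "in_diag lam r' c" using cd1_D[OF P(4)] by auto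
        moreover then have "1 \<le> r'" by (simp add: in_diag_def)
        ultimately have "in_diag ?L (Suc r') c \<and> ?T (Suc r', c) = CA" using t by (simp add: in_diag_build btr)
        then show False using a 1 \<open>1 \<le> r'\<close> by auto
      qed
      then have lv: "c \<in> live T E" using dc by (simp add: live_def)
      have "\<not> (b \<noteq> 0 \<and> c < b)"
      proof
        assume "b \<noteq> 0 \<and> c < b"
        then have "c < b \<and> in_diag ?L 1 b \<and> ?T (1, b) = CB" using blive by (simp add: in_diag_build bt1 bt1s topfCB)
        then show False using a 1 by blast
      qed
      then show ?thesis using 1 lv dc by (auto simp: bt1 bt1s topf_def)
    next
      case 2
      have d: "in_diag lam (r - 1) c" using a 2 by (simp add: in_diag_build)
      have n1: "\<not> (\<exists>r'. r - 1 < r' \<and> in_diag lam r' c \<and> T (r', c) = CA)"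
      proof
        assume "\<exists>r'. r - 1 < r' \<and> in_diag lam r' c \<and> T (r', c) = CA"
        then obtain r' where r': "r - 1 < r'" "in_diag lam r' c" "T (r', c) = CA" by blast
        then have "r < Suc r' \<and> in_diag ?L (Suc r') c \<and> ?T (Suc r', c) = CA" using 2
          by (simp add: in_diag_build btr)
        then show False using a by blast
      qed
      have n2: "\<not> (\<exists>c'. c < c' \<and> in_diag lam (r - 1) c' \<and> T (r - 1, c') = CB)"
      proof
        assume "\<exists>c'. c < c' \<and> in_diag lam (r - 1) c' \<and> T (r - 1, c') = CB"
        then obtain c' where c': "c < c'" "in_diag lam (r - 1) c'" "T (r - 1, c') = CB" by blast
        then have "c < c' \<and> in_diag ?L r c' \<and> ?T (r, c') = CB" using 2
          by (simp add: in_diag_build btr)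
        then show False using a by blast
      qed
      show ?thesis using P(7)[unfolded cd4_def, rule_format, of "r - 1" c] d n1 n2 2 by (simp add: btr)
    qed
  qed
  ultimately show "okT (Suc k) ?L ?T" by (simp add: okT_def)
  show "restrL ?L = lam" using P(1) by (auto simp: restrL_def buildL_def pz_def fun_eq_iff)
  show "restrT ?T = T"
  proof (rule ext, clarify)
    fix r c show "restrT ?T (r, c) = T (r, c)"
      by (cases "r = 0") (auto simp: restrT_def buildT_def T0)
  qed
  show "?L 1 = E" by (simp add: buildL_def)
  show "bpos ?T = b"
  proof (cases "b = 0")
    case True
    then have "\<forall>c. ?T (1, c) \<noteq> CB" by (simp add: buildT_def topf_def)
    then show ?thesis using True by (simp add: bpos_def)
  next
    case False
    have "?T (1, b) = CB" using False by (simp add: bt1 bt1s topfCB)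
    moreover have "\<And>c. ?T (1, c) = CB \<Longrightarrow> c = b" by (simp add: bt1 bt1s topfCB)
    ultimately have "(THE c. ?T (1, c) = CB) = b" by (rule the_equality)
    then show ?thesis using \<open>?T (1, b) = CB\<close> by (auto simp: bpos_def)
  qed
qed


lemma lam_le1: "pm k (lam::nat\<Rightarrow>nat) \<Longrightarrow> pz k lam \<Longrightarrow> 1 \<le> r \<Longrightarrow> lam r \<le> lam 1"
proof (induction r)
  case 0 then show ?case by simp
next
  case (Suc r)
  show ?case
  proof (cases "r = 0")
    case True then show ?thesis by (simp add: One_nat_def)
  next
    case False
    then have ih: "lam r \<le> lam 1" using Suc by auto
    show ?thesis
    proof (cases "r < k")
      case True
      then have "lam (Suc r) \<le> lam r" using Suc.prems(1) False by (auto simp: pm_def)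
      then show ?thesis using ih by linarith
    next
      case False
      then have "lam (Suc r) = 0" using Suc.prems(2) by (auto simp: pz_def)
      then show ?thesis by simp
    qed
  qed
qed

lemma diag_bound:
  assumes "okT k lam T" "T (r, c) \<noteq> CE"
  shows "1 \<le> r \<and> r \<le> k \<and> 1 \<le> c \<and> c \<le> lam 1"
proof -
  note P = okT_parts[OF assms(1)]
  have d: "in_diag lam r c" using cd1_D[OF P(4)] assms(2) .
  then have "c \<le> lam 1" using lam_le1[OF P(2) P(1)] by (auto simp: in_diag_def intro: le_trans)
  moreover have "r \<le> k"
  proof (rule ccontr)
    assume "\<not> r \<le> k" then have "lam r = 0" using P(1) by (auto simp: pz_def)
    then show False using d by (auto simp: in_diag_def)
  qed
  ultimately show ?thesis using d by (auto simp: in_diag_def)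
qed

lemma supp_sub:
  assumes "okT k lam T" "x \<noteq> CE"
  shows "{p. T p = x} \<subseteq> {1..k} \<times> {1..lam 1}"
  using diag_bound[OF assms(1)] assms(2) by fastforce

lemma finite_supp:
  assumes "okT k lam T" "x \<noteq> CE"
  shows "finite {p. T p = x}"
  using supp_sub[OF assms] finite_subset by blast

lemma alpha_col_inj:
  assumes "okT k lam T"
  shows "inj_on snd {p. T p = CA}"
proof (rule inj_onI)
  fix p q assume p: "p \<in> {p. T p = CA}" and q: "q \<in> {p. T p = CA}" and e: "snd p = snd q"
  obtain r c where pr: "p = (r, c)" by (cases p)
  obtain r' c' where qr: "q = (r', c')" by (cases q)
  note P = okT_parts[OF assms]
  have "c = c'" using e pr qr by simp
  have Tp: "T (r, c) = CA" and Tq: "T (r', c) = CA" using p q pr qr \<open>c = c'\<close> by auto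
  have dp: "in_diag lam r c" and dq: "in_diag lam r' c" using cd1_D[OF P(4)] Tp Tq by auto
  have "r = r'"
  proof (rule ccontr)
    assume "r \<noteq> r'"
    then consider "r < r'" | "r' < r" by linarith
    then show False
    proof cases
      case 1
      then have "T (r, c) = CE" using P(6)[unfolded cd3_def, rule_format, of r' c r] dq Tq dp
        by (auto simp: in_diag_def)
      then show False using Tp by simp
    next
      case 2
      then have "T (r', c) = CE" using P(6)[unfolded cd3_def, rule_format, of r c r'] dp Tp dq
        by (auto simp: in_diag_def)
      then show False using Tq by simp
    qed
  qed
  then show "p = q" using pr qr \<open>c = c'\<close> by simp
qed

lemma live_card:
  assumes ok: "okT k lam T" and le: "lam 1 \<le> E"
  shows "num_cell CA T \<le> E" and "card (live T E) = E - num_cell CA T"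
proof -
  let ?A = "{p. T p = CA}"
  have fA: "finite ?A" using finite_supp[OF ok] by simp
  have cA: "card (snd ` ?A) = num_cell CA T"
    using card_image[OF alpha_col_inj[OF ok]] by (simp add: num_cell_def)
  have sub: "snd ` ?A \<subseteq> {1..E}" using supp_sub[OF ok, of CA] le by fastforce
  have un: "live T E \<union> snd ` ?A = {1..E}"
  proof
    show "live T E \<union> snd ` ?A \<subseteq> {1..E}" using sub by (auto simp: live_def)
    show "{1..E} \<subseteq> live T E \<union> snd ` ?A"
    proof
      fix c assume c: "c \<in> {1..E}"
      show "c \<in> live T E \<union> snd ` ?A"
      proof (cases "\<forall>r. T (r, c) \<noteq> CA")
        case True then show ?thesis using c by (simp add: live_def)
      next
        case False
        then obtain r where "T (r, c) = CA" by blast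
        then have "(r, c) \<in> ?A" by simp
        then have "c \<in> snd ` ?A" by (metis imageI snd_conv)
        then show ?thesis by simp
      qed
    qed
  qed
  have dis: "live T E \<inter> snd ` ?A = {}" by (auto simp: live_def)
  have fl: "finite (live T E)" by (simp add: live_def)
  have "card (live T E \<union> snd ` ?A) = card (live T E) + card (snd ` ?A)"
    using card_Un_disjoint[OF fl finite_imageI[OF fA] dis] .
  then have "card (live T E) + card (snd ` ?A) = E" using un by simp
  then show "num_cell CA T \<le> E" and "card (live T E) = E - num_cell CA T" using cA by auto
qed

lemma count_build:
  assumes ok: "okT k lam T" and b: "b \<in> insert 0 (live T E)"
  shows "num_cell CA (buildT E T b) = num_cell CA T + card {c \<in> live T E. b < c}"
    and "num_cell CB (buildT E T b) = num_cell CB T + (if b = 0 then 0 else 1)"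
proof -
  note P = okT_parts[OF ok]
  have T0: "T (0, c) = CE" for c using P(4) by (auto simp: cd1_def in_diag_def)
  let ?sh = "\<lambda>p::nat\<times>nat. (Suc (fst p), snd p)"
  have inj: "inj_on ?sh X" for X by (auto simp: inj_on_def prod_eq_iff)
  have eqA: "{p. buildT E T b p = CA} = (\<lambda>c. (1, c)) ` {c \<in> live T E. b < c} \<union> ?sh ` {p. T p = CA}"
  proof (rule set_eqI)
    fix p :: "nat \<times> nat"
    obtain r c where p: "p = (r, c)" by (cases p)
    consider "r = 0" | "r = 1" | "2 \<le> r" by linarith
    then show "p \<in> {p. buildT E T b p = CA} \<longleftrightarrow> p \<in> (\<lambda>c. (1, c)) ` {c \<in> live T E. b < c} \<union> ?sh ` {p. T p = CA}"
    proof cases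
      case 1 then show ?thesis using p T0 by (auto simp: buildT_def)
    next
      case 2 then show ?thesis using p T0 by (auto simp: buildT_def topf_def image_iff)
    next
      case 3
      have "p \<in> ?sh ` {p. T p = CA} \<longleftrightarrow> T (r - 1, c) = CA"
      proof
        assume "p \<in> ?sh ` {p. T p = CA}"
        then obtain q where "T q = CA" "p = ?sh q" by blast
        then show "T (r - 1, c) = CA" using p by (cases q) auto
      next
        assume "T (r - 1, c) = CA"
        then have "?sh (r - 1, c) \<in> ?sh ` {p. T p = CA}" by blast
        then show "p \<in> ?sh ` {p. T p = CA}" using p 3 by simp
      qed
      then show ?thesis using p 3 by (auto simp: buildT_def)
    qed
  qed
  have eqB: "{p. buildT E T b p = CB} = (if b = 0 then {} else {(1, b)}) \<union> ?sh ` {p. T p = CB}"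
  proof (rule set_eqI)
    fix p :: "nat \<times> nat"
    obtain r c where p: "p = (r, c)" by (cases p)
    consider "r = 0" | "r = 1" | "2 \<le> r" by linarith
    then show "p \<in> {p. buildT E T b p = CB} \<longleftrightarrow> p \<in> (if b = 0 then {} else {(1, b)}) \<union> ?sh ` {p. T p = CB}"
    proof cases
      case 1 then show ?thesis using p T0 by (auto simp: buildT_def)
    next
      case 2 then show ?thesis using p T0 by (auto simp: buildT_def topf_def image_iff)
    next
      case 3
      have "p \<in> ?sh ` {p. T p = CB} \<longleftrightarrow> T (r - 1, c) = CB"
      proof
        assume "p \<in> ?sh ` {p. T p = CB}"
        then obtain q where "T q = CB" "p = ?sh q" by blast
        then show "T (r - 1, c) = CB" using p by (cases q) auto
      next
        assume "T (r - 1, c) = CB"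
        then have "?sh (r - 1, c) \<in> ?sh ` {p. T p = CB}" by blast
        then show "p \<in> ?sh ` {p. T p = CB}" using p 3 by simp
      qed
      then show ?thesis using p 3 by (auto simp: buildT_def)
    qed
  qed
  have fA: "finite {p. T p = CA}" and fB: "finite {p. T p = CB}" using finite_supp[OF ok] by auto
  have disA: "(\<lambda>c. (1::nat, c)) ` {c \<in> live T E. b < c} \<inter> ?sh ` {p. T p = CA} = {}"
    using T0 by (auto simp: image_iff)
  have disB: "(if b = 0 then {} else {(1::nat, b)}) \<inter> ?sh ` {p. T p = CB} = {}"
    using T0 by (auto simp: image_iff)
  have fl: "finite {c \<in> live T E. b < c}" by (simp add: live_def)
  have "card ((\<lambda>c. (1::nat, c)) ` {c \<in> live T E. b < c}) = card {c \<in> live T E. b < c}"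
    by (rule card_image) (auto simp: inj_on_def)
  then show "num_cell CA (buildT E T b) = num_cell CA T + card {c \<in> live T E. b < c}"
    unfolding num_cell_def eqA
    using card_Un_disjoint[OF finite_imageI[OF fl] finite_imageI[OF fA] disA] card_image[OF inj[of "{p. T p = CA}"]]
    by simp
  show "num_cell CB (buildT E T b) = num_cell CB T + (if b = 0 then 0 else 1)"
    unfolding num_cell_def eqB
    using card_Un_disjoint[OF _ finite_imageI[OF fB] disB] card_image[OF inj[of "{p. T p = CB}"]]
    by (cases "b = 0") auto
qed


lemma dval_bij:
  assumes fL: "finite L" and nz: "0 \<notin> (L::nat set)"
  shows "bij_betw (\<lambda>b. card {c \<in> L. b < c}) (insert 0 L) {0..card L}"
proof -
  let ?d = "\<lambda>b. card {c \<in> L. b < c}"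
  have lt: "?d b2 < ?d b1" if "b1 < b2" "b2 \<in> L" for b1 b2
  proof -
    have "{c \<in> L. b2 < c} \<subset> {c \<in> L. b1 < c}" using that by auto
    then show ?thesis using fL by (intro psubset_card_mono) auto
  qed
  have inj: "inj_on ?d (insert 0 L)"
  proof (rule inj_onI)
    fix x y assume x: "x \<in> insert 0 L" and y: "y \<in> insert 0 L" and e: "?d x = ?d y"
    show "x = y"
    proof (rule ccontr)
      assume "x \<noteq> y"
      then consider "x < y" | "y < x" by linarith
      then show False
      proof cases
        case 1 then have "y \<in> L" using y by auto
        then show False using lt[OF 1] e by simp
      next
        case 2 then have "x \<in> L" using x by auto
        then show False using lt[OF 2] e by simp
      qed
    qed
  qed
  have sub: "?d ` insert 0 L \<subseteq> {0..card L}"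
    using fL by (auto intro!: card_mono)
  have "card (?d ` insert 0 L) = card {0..card L}"
    using card_image[OF inj] fL nz by simp
  then have "?d ` insert 0 L = {0..card L}"
    using sub by (intro card_subset_eq) auto
  then show ?thesis using inj by (simp add: bij_betw_def)
qed

lemma dval_0: "0 \<notin> (L::nat set) \<Longrightarrow> card {c \<in> L. 0 < c} = card L"
proof -
  assume "0 \<notin> L"
  then have "{c \<in> L. 0 < c} = L" using neq0_conv by blast
  then show ?thesis by simp
qed

lemma dval_lt: "finite L \<Longrightarrow> b \<in> (L::nat set) \<Longrightarrow> card {c \<in> L. b < c} < card L"
  by (rule psubset_card_mono) auto

definition SS :: "nat \<Rightarrow> ((nat \<Rightarrow> nat) \<times> (nat \<times> nat \<Rightarrow> cell)) set" where
  "SS k = {(lam, T). okT k lam T}"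
definition Fset :: "nat \<Rightarrow> nat \<Rightarrow> nat \<Rightarrow> ((nat \<Rightarrow> nat) \<times> (nat \<times> nat \<Rightarrow> cell)) set" where
  "Fset k E J = {x \<in> SS k. fst x 1 = E \<and> num_cell CA (snd x) = J}"
definition Hset :: "nat \<Rightarrow> nat \<Rightarrow> ((nat \<Rightarrow> nat) \<times> (nat \<times> nat \<Rightarrow> cell)) set" where
  "Hset k E = {x \<in> SS k. fst x 1 \<le> E}"
definition Gset :: "nat \<Rightarrow> nat \<Rightarrow> nat \<Rightarrow> ((nat \<Rightarrow> nat) \<times> (nat \<times> nat \<Rightarrow> cell)) set" where
  "Gset k E J = {x \<in> Hset k E. num_cell CA (snd x) \<le> J}"
definition Fv :: "real \<Rightarrow> nat \<Rightarrow> nat \<Rightarrow> nat \<Rightarrow> real" where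
  "Fv \<beta> k E J = (\<Sum>x\<in>Fset k E J. \<beta> ^ num_cell CB (snd x))"

lemma finite_Hset: "finite (Hset k E)"
proof -
  let ?LA = "{f::nat\<Rightarrow>nat. \<forall>r. (r \<in> {1..k} \<longrightarrow> f r \<in> {0..E}) \<and> (r \<notin> {1..k} \<longrightarrow> f r = 0)}"
  let ?TB = "{g::nat\<times>nat\<Rightarrow>cell. \<forall>p. (p \<in> {1..k} \<times> {1..E} \<longrightarrow> g p \<in> {CA, CB, CE}) \<and> (p \<notin> {1..k} \<times> {1..E} \<longrightarrow> g p = CE)}"
  have f1: "finite ?LA" by (rule finite_set_of_finite_funs) auto
  have f2: "finite ?TB" by (rule finite_set_of_finite_funs) auto
  have "Hset k E \<subseteq> ?LA \<times> ?TB"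
  proof (rule subsetI)
    fix x assume xH: "x \<in> Hset k E"
    obtain lam T where x: "x = (lam, T)" by (cases x)
    from xH x have ok: "okT k lam T" and le: "lam 1 \<le> E" by (auto simp: Hset_def SS_def)
    note P = okT_parts[OF ok]
    have "lam \<in> ?LA"
    proof -
      have "\<forall>r. (r \<in> {1..k} \<longrightarrow> lam r \<in> {0..E})"
        using lam_le1[OF P(2) P(1)] le by (auto intro: le_trans)
      moreover have "\<forall>r. (r \<notin> {1..k} \<longrightarrow> lam r = 0)" using P(1) unfolding pz_def
        by (metis atLeastAtMost_iff less_one not_le)
      ultimately show ?thesis by blast
    qed
    moreover have "T \<in> ?TB"
    proof -
      have "\<forall>p. (p \<notin> {1..k} \<times> {1..E} \<longrightarrow> T p = CE)"
      proof (intro allI impI)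
        fix p :: "nat \<times> nat" assume pn: "p \<notin> {1..k} \<times> {1..E}"
        obtain r c where p: "p = (r, c)" by (cases p)
        show "T p = CE"
        proof (rule ccontr)
          assume "T p \<noteq> CE"
          then have "1 \<le> r \<and> r \<le> k \<and> 1 \<le> c \<and> c \<le> lam 1" using diag_bound[OF ok] p by auto
          then show False using pn p le by auto
        qed
      qed
      moreover have "\<forall>p. T p \<in> {CA, CB, CE}" by (metis cell.exhaust insertCI)
      ultimately show ?thesis by blast
    qed
    ultimately show "x \<in> ?LA \<times> ?TB" using x by simp
  qed
  then show ?thesis using f1 f2 finite_subset by blast
qed

lemma finite_Fset: "finite (Fset k E J)"
  by (rule finite_subset[OF _ finite_Hset[of k E]]) (auto simp: Fset_def Hset_def)

lemma finite_Gset: "finite (Gset k E J)"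
  by (rule finite_subset[OF _ finite_Hset[of k E]]) (auto simp: Gset_def)


lemma inner_sum:
  assumes ok: "okT k lam T" and le: "lam 1 \<le> E"
  shows "(\<Sum>b\<in>{b \<in> insert 0 (live T E). num_cell CA T + card {c \<in> live T E. b < c} = J}.
            \<beta> ^ (num_cell CB T + (if b = 0 then 0 else 1)))
         = (if num_cell CA T \<le> J \<and> J \<le> E then \<beta> ^ (num_cell CB T + (if J < E then 1 else 0)) else (0::real))"
proof -
  let ?L = "live T E" and ?NA = "num_cell CA T" and ?NB = "num_cell CB T"
  let ?d = "\<lambda>b. card {c \<in> ?L. b < c}"
  let ?n = "card ?L"
  have fL: "finite ?L" by (simp add: live_def)
  have nz: "0 \<notin> ?L" by (simp add: live_def)
  have n: "?n = E - ?NA" and NAE: "?NA \<le> E" using live_card[OF ok le] by auto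
  have bij: "bij_betw ?d (insert 0 ?L) {0..?n}" by (rule dval_bij[OF fL nz])
  let ?f = "\<lambda>i. if ?NA + i = J then \<beta> ^ (?NB + (if i = ?n then 0 else 1)) else (0::real)"
  have "(\<Sum>b\<in>{b \<in> insert 0 ?L. ?NA + ?d b = J}. \<beta> ^ (?NB + (if b = 0 then 0 else 1)))
      = (\<Sum>b\<in>insert 0 ?L. ?f (?d b))"
  proof -
    have "(\<Sum>b\<in>{b \<in> insert 0 ?L. ?NA + ?d b = J}. \<beta> ^ (?NB + (if b = 0 then 0 else 1)))
        = (\<Sum>b\<in>insert 0 ?L. if ?NA + ?d b = J then \<beta> ^ (?NB + (if b = 0 then 0 else 1)) else 0)"
      using fL by (intro sum.inter_filter) simp
    also have "\<dots> = (\<Sum>b\<in>insert 0 ?L. ?f (?d b))"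
    proof (rule sum.cong[OF refl])
      fix b assume b: "b \<in> insert 0 ?L"
      have "(b = 0) = (?d b = ?n)"
      proof
        assume "b = 0" then show "?d b = ?n" using dval_0[OF nz] by simp
      next
        assume e: "?d b = ?n"
        show "b = 0"
        proof (rule ccontr)
          assume "b \<noteq> 0" then have "b \<in> ?L" using b by simp
          then show False using dval_lt[OF fL] e by (metis less_irrefl)
        qed
      qed
      then show "(if ?NA + ?d b = J then \<beta> ^ (?NB + (if b = 0 then 0 else 1)) else 0) = ?f (?d b)"
        by simp
    qed
    finally show ?thesis .
  qed
  also have "\<dots> = (\<Sum>i\<in>{0..?n}. ?f i)"
    using sum.reindex_bij_betw[OF bij, of ?f] by simp
  also have "\<dots> = (\<Sum>i\<in>{0..?n}. if i = J - ?NA then (if ?NA \<le> J then \<beta> ^ (?NB + (if i = ?n then 0 else 1)) else 0) else 0)"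
    by (rule sum.cong[OF refl]) auto
  also have "\<dots> = (if J - ?NA \<in> {0..?n} then (if ?NA \<le> J then \<beta> ^ (?NB + (if J - ?NA = ?n then 0 else 1)) else 0) else 0)"
    by (rule sum.delta) simp
  also have "\<dots> = (if ?NA \<le> J \<and> J \<le> E then \<beta> ^ (?NB + (if J < E then 1 else 0)) else 0)"
    using n NAE by auto
  finally show ?thesis .
qed

lemma Fv_Suc:
  assumes E1: "1 \<le> E"
  shows "Fv \<beta> (Suc k) E J = (if J \<le> E then \<beta> ^ (if J < E then 1 else 0) * (\<Sum>x\<in>Gset k E J. \<beta> ^ num_cell CB (snd x)) else 0)"
proof -
  let ?B = "\<lambda>x. {b \<in> insert 0 (live (snd x) E). num_cell CA (snd x) + card {c \<in> live (snd x) E. b < c} = J}"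
  let ?Sig = "Sigma (Hset k E) ?B"
  let ?h = "\<lambda>(x::(nat \<Rightarrow> nat) \<times> (nat \<times> nat \<Rightarrow> cell), b::nat). \<beta> ^ (num_cell CB (snd x) + (if b = 0 then 0 else 1))"
  let ?i = "\<lambda>(x::(nat \<Rightarrow> nat) \<times> (nat \<times> nat \<Rightarrow> cell), b::nat). (buildL E (fst x), buildT E (snd x) b)"
  let ?j = "\<lambda>(lam, T). ((restrL lam, restrT T), bpos T)"
  have step1: "Fv \<beta> (Suc k) E J = sum ?h ?Sig"
    unfolding Fv_def
  proof (rule sum.reindex_bij_witness[where i = ?i and j = ?j])
    fix a assume a: "a \<in> Fset (Suc k) E J"
    obtain lam T where a': "a = (lam, T)" by (cases a)
    have ok: "okT (Suc k) lam T" and l1: "lam 1 = E" and na: "num_cell CA T = J"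
      using a a' by (auto simp: Fset_def SS_def)
    note D = decomp[OF ok]
    have okr: "okT k (restrL lam) (restrT T)" by (rule restr_ok[OF ok])
    have bb: "bpos T \<in> insert 0 (live (restrT T) E)" using D(3) l1 by simp
    have BT: "buildT E (restrT T) (bpos T) = T" using D(4) l1 by simp
    note CB = count_build[OF okr bb]
    show "?i (?j a) = a" using a' D(2) BT l1 by simp
    show "?j a \<in> ?Sig"
      using a' okr D(1) l1 bb CB(1) BT na by (auto simp: Hset_def SS_def)
    show "?h (?j a) = \<beta> ^ num_cell CB (snd a)"
      using a' CB(2) BT by simp
  next
    fix y assume y: "y \<in> ?Sig"
    obtain lam T b where y': "y = ((lam, T), b)" by (metis prod.collapse)
    have ok: "okT k lam T" and le: "lam 1 \<le> E" and b: "b \<in> insert 0 (live T E)"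
      and na: "num_cell CA T + card {c \<in> live T E. b < c} = J"
      using y y' by (auto simp: Hset_def SS_def)
    note B = build_ok[OF ok le E1 b]
    note CB = count_build[OF ok b]
    show "?j (?i y) = y" using y' B by simp
    show "?i y \<in> Fset (Suc k) E J" using y' B CB(1) na by (simp add: Fset_def SS_def)
  qed
  have fB: "\<forall>x\<in>Hset k E. finite (?B x)" by (auto simp: live_def)
  have step2: "sum ?h ?Sig = (\<Sum>x\<in>Hset k E. \<Sum>b\<in>?B x. \<beta> ^ (num_cell CB (snd x) + (if b = 0 then 0 else 1)))"
    by (rule sum.Sigma[OF finite_Hset fB, symmetric])
  have step3: "(\<Sum>x\<in>Hset k E. \<Sum>b\<in>?B x. \<beta> ^ (num_cell CB (snd x) + (if b = 0 then 0 else 1)))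
     = (\<Sum>x\<in>Hset k E. if num_cell CA (snd x) \<le> J \<and> J \<le> E then \<beta> ^ (num_cell CB (snd x) + (if J < E then 1 else 0)) else 0)"
  proof (rule sum.cong[OF refl])
    fix x assume x: "x \<in> Hset k E"
    obtain lam T where x': "x = (lam, T)" by (cases x)
    have ok: "okT k lam T" and le: "lam 1 \<le> E" using x x' by (auto simp: Hset_def SS_def)
    show "(\<Sum>b\<in>?B x. \<beta> ^ (num_cell CB (snd x) + (if b = 0 then 0 else 1))) =
       (if num_cell CA (snd x) \<le> J \<and> J \<le> E then \<beta> ^ (num_cell CB (snd x) + (if J < E then 1 else 0)) else 0)"
      using inner_sum[OF ok le, where J=J and \<beta>=\<beta>] x' by simp
  qed
  have step4: "(\<Sum>x\<in>Hset k E. if num_cell CA (snd x) \<le> J \<and> J \<le> E then \<beta> ^ (num_cell CB (snd x) + (if J < E then 1 else 0)) else 0)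
     = (if J \<le> E then \<beta> ^ (if J < E then 1 else 0) * (\<Sum>x\<in>Gset k E J. \<beta> ^ num_cell CB (snd x)) else 0)"
  proof (cases "J \<le> E")
    case True
    have "(\<Sum>x\<in>Hset k E. if num_cell CA (snd x) \<le> J \<and> J \<le> E then \<beta> ^ (num_cell CB (snd x) + (if J < E then 1 else 0)) else 0)
       = (\<Sum>x\<in>Gset k E J. \<beta> ^ (num_cell CB (snd x) + (if J < E then 1 else 0)))"
      unfolding Gset_def using True by (subst sum.inter_filter[OF finite_Hset]) simp
    also have "\<dots> = \<beta> ^ (if J < E then 1 else 0) * (\<Sum>x\<in>Gset k E J. \<beta> ^ num_cell CB (snd x))"
      by (simp add: sum_distrib_left power_add mult.commute)
    finally show ?thesis using True by simp
  next
    case False then show ?thesis by simp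
  qed
  show ?thesis using step1 step2 step3 step4 by simp
qed


lemma Fv_Suc_0: "Fv \<beta> (Suc k) 0 J = 0"
proof -
  have "Fset (Suc k) 0 J = {}"
  proof (rule ccontr)
    assume "Fset (Suc k) 0 J \<noteq> {}"
    then obtain lam T where "okT (Suc k) lam T" "lam 1 = 0" by (auto simp: Fset_def SS_def)
    then show False using okT_parts(3) by (fastforce simp: pp_def)
  qed
  then show ?thesis by (simp add: Fv_def)
qed

lemma Fv_0: "Fv \<beta> 0 E J = (if E = 0 \<and> J = 0 then 1 else 0)"
proof -
  let ?z = "((\<lambda>_. 0) :: nat \<Rightarrow> nat, (\<lambda>_. CE) :: nat \<times> nat \<Rightarrow> cell)"
  have S: "SS 0 = {?z}"
  proof
    show "SS 0 \<subseteq> {?z}"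
    proof
      fix x assume "x \<in> SS 0"
      then obtain lam T where x: "x = (lam, T)" and ok: "okT 0 lam T" by (auto simp: SS_def)
      note P = okT_parts[OF ok]
      have l: "lam = (\<lambda>_. 0)" using P(1) by (auto simp: pz_def fun_eq_iff)
      have "T = (\<lambda>_. CE)" using P(4) l by (auto simp: cd1_def in_diag_def fun_eq_iff)
      then show "x \<in> {?z}" using x l by simp
    qed
    show "{?z} \<subseteq> SS 0"
      by (auto simp: SS_def okT_def pz_def pm_def pp_def cd1_def cd2_def cd3_def cd4_def in_diag_def)
  qed
  have n: "num_cell x (\<lambda>_. CE) = 0" if "x \<noteq> CE" for x using that by (simp add: num_cell_def)
  have nA: "num_cell CA (\<lambda>_. CE) = 0" by (rule n) simp
  have nB: "num_cell CB (\<lambda>_. CE) = 0" by (rule n) simp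
  have "Fset 0 E J = (if E = 0 \<and> J = 0 then {?z} else {})"
    by (auto simp: Fset_def S nA)
  then show ?thesis by (simp add: Fv_def nB)
qed

lemma Gset_sum: "(\<Sum>x\<in>Gset k E J. \<beta> ^ num_cell CB (snd x)) = (\<Sum>E'\<le>E. \<Sum>J'\<le>J. Fv \<beta> k E' J')"
proof -
  let ?g = "\<lambda>x::(nat \<Rightarrow> nat) \<times> (nat \<times> nat \<Rightarrow> cell). (fst x 1, num_cell CA (snd x))"
  have im: "?g ` Gset k E J \<subseteq> {..E} \<times> {..J}" by (auto simp: Gset_def Hset_def)
  have "(\<Sum>x\<in>Gset k E J. \<beta> ^ num_cell CB (snd x))
     = (\<Sum>y\<in>{..E} \<times> {..J}. \<Sum>x\<in>{x \<in> Gset k E J. ?g x = y}. \<beta> ^ num_cell CB (snd x))"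
    by (rule sum.group[OF finite_Gset _ im, symmetric]) simp
  also have "\<dots> = (\<Sum>y\<in>{..E} \<times> {..J}. Fv \<beta> k (fst y) (snd y))"
  proof (rule sum.cong[OF refl])
    fix y assume y: "y \<in> {..E} \<times> {..J}"
    have "{x \<in> Gset k E J. ?g x = y} = Fset k (fst y) (snd y)"
      using y by (auto simp: Gset_def Hset_def Fset_def)
    then show "(\<Sum>x\<in>{x \<in> Gset k E J. ?g x = y}. \<beta> ^ num_cell CB (snd x)) = Fv \<beta> k (fst y) (snd y)"
      by (simp add: Fv_def)
  qed
  also have "\<dots> = (\<Sum>E'\<le>E. \<Sum>J'\<le>J. Fv \<beta> k E' J')"
    by (simp add: sum.cartesian_product split_beta)
  finally show ?thesis .
qed

lemma Fv_Fr: "Fv \<beta> k E J = Fr \<beta> k E J"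
proof (induction k arbitrary: E J)
  case 0 then show ?case by (simp add: Fv_0)
next
  case (Suc k)
  show ?case
  proof (cases "1 \<le> E")
    case True
    then show ?thesis using Fv_Suc[OF True] Gset_sum Suc.IH by simp
  next
    case False
    then have "E = 0" by simp
    then show ?thesis using Fv_Suc_0 by simp
  qed
qed


lemma lam_ge_k:
  assumes "pm k (lam::nat\<Rightarrow>nat)" "1 \<le> r" "r \<le> k"
  shows "lam k \<le> lam r"
  using assms(3)
proof (induction r rule: inc_induct)
  case base then show ?case by simp
next
  case (step n)
  have "1 \<le> n" using assms(2) step.hyps(1) by simp
  then have "lam (Suc n) \<le> lam n" using assms(1) step.hyps(2) by (auto simp: pm_def)
  then show ?case using step.IH by linarith
qed

lemma is_cct_cd: "is_cct k n lam T \<longleftrightarrow> is_partition k n lam \<and> cd1 lam T \<and> cd2 lam T \<and> cd3 lam T \<and> cd4 lam T"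
  unfolding is_cct_def cd1_def cd2_def cd3_def cd4_def by (rule refl)

lemma Nset_eq:
  assumes k1: "1 \<le> k"
  shows "{(lam, T). is_cct k (k + m) lam T \<and> lam 1 = m \<and> 1 \<le> lam k} = {x \<in> SS k. fst x 1 = m}"
proof (rule set_eqI)
  fix x :: "(nat \<Rightarrow> nat) \<times> (nat \<times> nat \<Rightarrow> cell)"
  obtain lam T where x: "x = (lam, T)" by (cases x)
  have "is_cct k (k + m) lam T \<and> lam 1 = m \<and> 1 \<le> lam k \<longleftrightarrow> okT k lam T \<and> lam 1 = m"
  proof
    assume a: "is_cct k (k + m) lam T \<and> lam 1 = m \<and> 1 \<le> lam k"
    have pz: "pz k lam" and pm: "pm k lam" using a by (auto simp: is_cct_def is_partition_def pz_def pm_def)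
    have "pp k lam" using lam_ge_k[OF pm] a by (fastforce simp: pp_def)
    then show "okT k lam T \<and> lam 1 = m" using a pz pm
      unfolding okT_def is_cct_cd by blast
  next
    assume a: "okT k lam T \<and> lam 1 = m"
    note P = okT_parts[OF a[THEN conjunct1]]
    have "1 \<le> lam k" using P(3) k1 by (simp add: pp_def)
    moreover have "is_partition k (k + m) lam" using P(1) P(2) a by (simp add: is_partition_def pz_def pm_def)
    ultimately show "is_cct k (k + m) lam T \<and> lam 1 = m \<and> 1 \<le> lam k" using P a
      unfolding is_cct_cd by blast
  qed
  then show "x \<in> {(lam, T). is_cct k (k + m) lam T \<and> lam 1 = m \<and> 1 \<le> lam k} \<longleftrightarrow> x \<in> {x \<in> SS k. fst x 1 = m}"
    using x by (simp add: SS_def)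
qed

lemma Nprime_Fr:
  assumes k1: "1 \<le> k"
  shows "Nprime m k \<alpha> \<beta> = \<alpha> ^ k * \<beta> ^ m * (\<Sum>J\<le>m. \<alpha> ^ J * Fr \<beta> k m J)"
proof -
  let ?A = "{x \<in> SS k. fst x 1 = m}"
  have fA: "finite ?A" by (rule finite_subset[OF _ finite_Hset[of k m]]) (auto simp: Hset_def)
  have "Nprime m k \<alpha> \<beta> = (\<Sum>x\<in>?A. cct_wt k (k + m) \<alpha> \<beta> (snd x))"
    unfolding Nprime_def Nset_eq[OF k1] by (simp add: split_beta)
  also have "\<dots> = (\<Sum>J\<in>{..m}. \<Sum>x\<in>{x \<in> ?A. num_cell CA (snd x) = J}. cct_wt k (k + m) \<alpha> \<beta> (snd x))"
  proof (rule sum.group[OF fA _, symmetric])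
    show "finite {..m}" by simp
    show "(\<lambda>x. num_cell CA (snd x)) ` ?A \<subseteq> {..m}"
    proof
      fix y assume "y \<in> (\<lambda>x. num_cell CA (snd x)) ` ?A"
      then obtain lam T where "okT k lam T" "lam 1 = m" "y = num_cell CA T" by (auto simp: SS_def)
      then show "y \<in> {..m}" using live_card(1)[of k lam T m] by simp
    qed
  qed
  also have "\<dots> = (\<Sum>J\<le>m. \<alpha> ^ k * \<beta> ^ m * (\<alpha> ^ J * Fv \<beta> k m J))"
  proof (rule sum.cong[OF refl])
    fix J assume J: "J \<in> {..m}"
    have e: "{x \<in> ?A. num_cell CA (snd x) = J} = Fset k m J" by (auto simp: Fset_def)
    show "(\<Sum>x\<in>{x \<in> ?A. num_cell CA (snd x) = J}. cct_wt k (k + m) \<alpha> \<beta> (snd x)) = \<alpha> ^ k * \<beta> ^ m * (\<alpha> ^ J * Fv \<beta> k m J)"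
      unfolding e Fv_def cct_wt_def
      by (simp add: Fset_def sum_distrib_left power_add mult_ac)
  qed
  also have "\<dots> = \<alpha> ^ k * \<beta> ^ m * (\<Sum>J\<le>m. \<alpha> ^ J * Fr \<beta> k m J)"
    by (simp add: sum_distrib_left Fv_Fr)
  finally show ?thesis .
qed



lemma gch_int: "real_of_int (int n) gchoose k = real (n choose k)"
  by (simp add: binomial_gbinomial)

lemma gch_nat: "real n gchoose k = real (n choose k)"
  by (simp add: binomial_gbinomial)

lemma gch_m1: "real_of_int (-1) gchoose k = (-1) ^ k"
  using gbinomial_minus[of "1::real" k] binomial_gbinomial[of k k, where 'a=real] by simp

lemma aa_sym: "aa e l = int ((e + l) choose e)"
  by (simp add: aa_def binomial_symmetric[of l "e + l"] add.commute)

lemma ab_sym: "ab e l = int ((e + l) choose Suc e)"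
proof (cases l)
  case 0 then show ?thesis by (simp add: ab_def binomial_eq_0)
next
  case (Suc l')
  have "(e + Suc l') choose l' = (e + Suc l') choose (e + Suc l' - l')"
    by (rule binomial_symmetric) simp
  then show ?thesis using Suc by (simp add: ab_def)
qed

lemma Frc_D:
  assumes m: "1 \<le> m" and J: "J \<le> m" and l: "l \<le> Suc k"
  shows "real_of_int (Frc k m J l) =
    (real_of_int (int m + int l - 2 + kdelta J m) gchoose (m - 1)) *
       (real_of_int (int (Suc k) + int J - 2 + kdelta l (Suc k)) gchoose (Suc k - 1))
     - (real_of_int (int m + int l - 2 + kdelta J m) gchoose m) *
       (real_of_int (int (Suc k) + int J - 2 + kdelta l (Suc k)) gchoose (Suc k))"
proof -
  obtain e where e: "m = Suc e" using m by (cases m) auto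
  consider "J < m \<and> l = 0" | "J < m \<and> l \<noteq> 0" | "J = m \<and> l \<le> k" | "J = m \<and> l = Suc k" using J l by linarith
  then show ?thesis
  proof cases
    case 1
    have F: "Frc k m J l = 0" using 1 by (simp add: Frc_def)
    have A: "int m + int l - 2 + kdelta J m = int e - 1" using 1 e by (simp add: kdelta_def)
    have B: "int (Suc k) + int J - 2 + kdelta l (Suc k) = int k + int J - 1" using 1 by (simp add: kdelta_def)
    show ?thesis
    proof (cases e)
      case 0
      then have J0: "J = 0" using 1 e by simp
      show ?thesis
      proof (cases k)
        case 0
        have m1: "m = 1" using e \<open>e = 0\<close> by simp
        show ?thesis unfolding A B using F J0 \<open>e = 0\<close> 0 m1 gch_m1[of 0] gch_m1[of 1] by simp
      next
        case (Suc k')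
        have "int k + int J - 1 = int k'" using Suc J0 by simp
        then show ?thesis unfolding A B using F \<open>e = 0\<close> Suc by (simp add: gch_int gch_nat binomial_eq_0)
      qed
    next
      case (Suc e')
      have "int e - 1 = int e'" using Suc by simp
      then show ?thesis unfolding A using F Suc e by (simp add: gch_int gch_nat binomial_eq_0)
    qed
  next
    case 2
    then obtain l' where l': "l = Suc l'" by (cases l) auto
    define N where "N = k + J + (if l' = k then 1 else 0) - 1"
    have pos: "1 \<le> k + J + (if l' = k then 1 else 0)" using l l' by auto
    have F: "Frc k m J l = aa e l' * int (N choose k) - ab e l' * int (N choose Suc k)"
      using Frc_below[of J e k l] 2 e l' by (simp add: N_def)
    have A: "int m + int l - 2 + kdelta J m = int (e + l')" using 2 e l' by (simp add: kdelta_def)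
    have B: "int (Suc k) + int J - 2 + kdelta l (Suc k) = int N" using pos l' by (simp add: kdelta_def N_def)
    show ?thesis unfolding A B gch_int using F e by (simp add: gch_int gch_nat aa_sym ab_sym)
  next
    case 3
    have F: "Frc k m J l = aa e l * int ((k + e) choose k) - ab e l * int ((k + e) choose Suc k)"
      using Frc_diag[of k e l] 3 e by simp
    have A: "int m + int l - 2 + kdelta J m = int (e + l)" using 3 e by (simp add: kdelta_def)
    have B: "int (Suc k) + int J - 2 + kdelta l (Suc k) = int (k + e)" using 3 e by (simp add: kdelta_def)
    show ?thesis unfolding A B gch_int using F e by (simp add: gch_int gch_nat aa_sym ab_sym)
  next
    case 4
    define n where "n = e + Suc k"
    have F: "Frc k m J l = 0" using 4 e by (simp add: Frc_def)
    have A: "int m + int l - 2 + kdelta J m = int n" using 4 e by (simp add: kdelta_def n_def)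
    have B: "int (Suc k) + int J - 2 + kdelta l (Suc k) = int n" using 4 e by (simp add: kdelta_def n_def)
    have s1: "n choose e = n choose Suc k" using binomial_symmetric[of e n] by (simp add: n_def)
    have s2: "n choose Suc e = n choose k" using binomial_symmetric[of k n] by (simp add: n_def)
    show ?thesis unfolding A B gch_int using F e s1 s2 by (simp add: gch_int gch_nat)
  qed
qed

lemma Fr_closed:
  assumes k: "1 \<le> k" and m: "1 \<le> m" and J: "J \<le> m"
  shows "Fr \<beta> k m J = (\<Sum>l\<le>k. \<beta> ^ l *
      ((real_of_int (int m + int l - 2 + kdelta J m) gchoose (m - 1)) *
       (real_of_int (int k + int J - 2 + kdelta l k) gchoose (k - 1))
     - (real_of_int (int m + int l - 2 + kdelta J m) gchoose m) *
       (real_of_int (int k + int J - 2 + kdelta l k) gchoose k)))"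
proof -
  obtain k' where k': "k = Suc k'" using k by (cases k) auto
  have "Fr \<beta> (Suc k') m J = (\<Sum>l\<le>Suc k'. \<beta> ^ l * real_of_int (Frc k' m J l))"
    by (rule Fr_Suc_closed[OF Ss_closed])
  also have "\<dots> = (\<Sum>l\<le>Suc k'. \<beta> ^ l *
      ((real_of_int (int m + int l - 2 + kdelta J m) gchoose (m - 1)) *
       (real_of_int (int (Suc k') + int J - 2 + kdelta l (Suc k')) gchoose (Suc k' - 1))
     - (real_of_int (int m + int l - 2 + kdelta J m) gchoose m) *
       (real_of_int (int (Suc k') + int J - 2 + kdelta l (Suc k')) gchoose (Suc k'))))"
    by (intro sum.cong refl) (simp add: Frc_D[OF m J])
  finally show ?thesis using k' by simp
qed

theorem theorem6p1:
  fixes m k :: nat and \<alpha> \<beta> :: real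
  assumes "1 \<le> m" and "1 \<le> k"
  shows "Nprime m k \<alpha> \<beta> =
    \<alpha> ^ k * \<beta> ^ m *
    (\<Sum>l = 0..k. \<Sum>j = 0..m. \<alpha> ^ j * \<beta> ^ l *
      ((real_of_int (int m + int l - 2 + kdelta j m) gchoose (m - 1)) *
       (real_of_int (int k + int j - 2 + kdelta l k) gchoose (k - 1))
     - (real_of_int (int m + int l - 2 + kdelta j m) gchoose m) *
       (real_of_int (int k + int j - 2 + kdelta l k) gchoose k)))"
proof -
  have "Nprime m k \<alpha> \<beta> = \<alpha> ^ k * \<beta> ^ m * (\<Sum>J\<le>m. \<alpha> ^ J * Fr \<beta> k m J)"
    by (rule Nprime_Fr[OF assms(2)])
  also have "(\<Sum>J\<le>m. \<alpha> ^ J * Fr \<beta> k m J) = (\<Sum>j\<le>m. \<Sum>l\<le>k. \<alpha> ^ j * \<beta> ^ l *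
      ((real_of_int (int m + int l - 2 + kdelta j m) gchoose (m - 1)) *
       (real_of_int (int k + int j - 2 + kdelta l k) gchoose (k - 1))
     - (real_of_int (int m + int l - 2 + kdelta j m) gchoose m) *
       (real_of_int (int k + int j - 2 + kdelta l k) gchoose k)))"
    by (intro sum.cong refl) (simp add: Fr_closed[OF assms(2) assms(1)] sum_distrib_left mult.assoc)
  also have "\<dots> = (\<Sum>l = 0..k. \<Sum>j = 0..m. \<alpha> ^ j * \<beta> ^ l *
      ((real_of_int (int m + int l - 2 + kdelta j m) gchoose (m - 1)) *
       (real_of_int (int k + int j - 2 + kdelta l k) gchoose (k - 1))
     - (real_of_int (int m + int l - 2 + kdelta j m) gchoose m) *
       (real_of_int (int k + int j - 2 + kdelta l k) gchoose k)))"
    by (subst sum.swap) (simp add: atLeast0AtMost)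
  finally show ?thesis .
qed

end
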